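(* Let $M$ be a matroid on $E$ whose dual is transversal with maximal presentation $\mathcal A=(A_1,\ldots,A_r)$, $r=r^*(M)$; let $e\in E$, and let $G$ be a minimal $(e,\mathcal A)$-presenting graph on vertex set $\mathcal A_e(E)$ for which the identity map is the presenting map. Let $F$ be a cyclic flat of $M\backslash e$ such that $G[\mathcal A_e(F\cup\{e\})]$ contains no cycle. (i) If $|\mathcal A_e(F\cup\{e\})|\le 1$, then $\alpha_{M\backslash e}(F)=|\{i\in\mathcal A(F): A_i=F\}|$. (ii) If $|\mathcal A_e(F\cup\{e\})|>1$, then $\alpha_{M\backslash e}(F)$ equals the number of edges $\{i,j\}$ of $G[\mathcal A_e(F\cup\{e\})]$ such that $\mathrm{cl}_{M\backslash e}(A_i\cup A_j-e)=F$.
   Context: $M^*=M[\mathcal A]$, the transversal matroid whose independent sets are the partial transversals of $\mathcal A$; the presentation is maximal if every $A_i$ is a cyclic flat of $M$ (a flat that is a union of circuits). For $X\subseteq E$: $\mathcal A(X)=\{i\in[r]:A_i\subseteq X\}$, $\mathcal A_e(X)=\{i\in\mathcal A(X): e\in A_i\}$, and $G[U]$ is the subgraph induced by $U$. A graph with vertex set $\mathcal A_e(E)$ is $(e,\mathcal A)$-presenting if for all distinct $i,j\in\mathcal A_e(E)$ the graph $G[\mathcal A_e(\mathrm{cl}_M(A_i\cup A_j))]$ is connected; minimal if deleting any one edge destroys this property. For a matroid $N$ with set $\mathcal Z(N)$ of cyclic flats, $\alpha_N$ is defined recursively on subsets $X\subseteq E(N)$ by $\alpha_N(X)=|X|-r_N(X)-\sum_{F'\in\mathcal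 Z(N),\,F'\subsetneq X}\alpha_N(F')$. *)

theory Defs
  imports Main
begin

definition matroid :: "'a set \<Rightarrow> ('a set \<Rightarrow> bool) \<Rightarrow> bool" where
  "matroid E ind \<longleftrightarrow> finite E \<and> ind {} \<and> (\<forall>X. ind X \<longrightarrow> X \<subseteq> E)
     \<and> (\<forall>X Y. ind X \<and> Y \<subseteq> X \<longrightarrow> ind Y)
     \<and> (\<forall>X Y. ind X \<and> ind Y \<and> card X < card Y \<longrightarrow> (\<exists>y\<in>Y - X. ind (insert y X)))"

definition rank :: "('a set \<Rightarrow> bool) \<Rightarrow> 'a set \<Rightarrow> nat" where
  "rank ind X = Max {card I | I. I \<subseteq> X \<and> ind I}"

definition cl :: "'a set \<Rightarrow> ('a set \<Rightarrow> bool) \<Rightarrow> 'a set \<Rightarrow> 'a set" where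
  "cl E ind X = {x\<in>E. rank ind (insert x X) = rank ind X}"

definition basis :: "('a set \<Rightarrow> bool) \<Rightarrow> 'a set \<Rightarrow> bool" where
  "basis ind B \<longleftrightarrow> ind B \<and> (\<forall>X. ind X \<and> B \<subseteq> X \<longrightarrow> X = B)"

definition circuit :: "'a set \<Rightarrow> ('a set \<Rightarrow> bool) \<Rightarrow> 'a set \<Rightarrow> bool" where
  "circuit E ind C \<longleftrightarrow> C \<subseteq> E \<and> \<not> ind C \<and> (\<forall>x\<in>C. ind (C - {x}))"

definition flat :: "'a set \<Rightarrow> ('a set \<Rightarrow> bool) \<Rightarrow> 'a set \<Rightarrow> bool" where
  "flat E ind X \<longleftrightarrow> X \<subseteq> E \<and> cl E ind X = X"

definition cyclic_flat :: "'a set \<Rightarrow> ('a set \<Rightarrow> bool) \<Rightarrow> 'a set \<Rightarrow> bool" where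
  "cyclic_flat E ind X \<longleftrightarrow> flat E ind X \<and> X = \<Union>{C. circuit E ind C \<and> C \<subseteq> X}"

definition dual_indep :: "'a set \<Rightarrow> ('a set \<Rightarrow> bool) \<Rightarrow> 'a set \<Rightarrow> bool" where
  "dual_indep E ind X \<longleftrightarrow> X \<subseteq> E \<and> (\<exists>B. basis ind B \<and> X \<inter> B = {})"

text \<open>Deletion M \ e (ground set E - {e}).\<close>
definition del_indep :: "('a set \<Rightarrow> bool) \<Rightarrow> 'a \<Rightarrow> 'a set \<Rightarrow> bool" where
  "del_indep ind e X \<longleftrightarrow> ind X \<and> e \<notin> X"

definition partial_transversal :: "'a set \<Rightarrow> (nat \<Rightarrow> 'a set) \<Rightarrow> nat \<Rightarrow> 'a set \<Rightarrow> bool" where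
  "partial_transversal E A r X \<longleftrightarrow> X \<subseteq> E \<and>
     (\<exists>f. inj_on f X \<and> (\<forall>x\<in>X. f x \<in> {1..r} \<and> x \<in> A (f x)))"

definition maximal_presentation :: "'a set \<Rightarrow> ('a set \<Rightarrow> bool) \<Rightarrow> (nat \<Rightarrow> 'a set) \<Rightarrow> nat \<Rightarrow> bool" where
  "maximal_presentation E ind A r \<longleftrightarrow> (\<forall>i\<in>{1..r}. cyclic_flat E ind (A i))"

definition Aset :: "(nat \<Rightarrow> 'a set) \<Rightarrow> nat \<Rightarrow> 'a set \<Rightarrow> nat set" where
  "Aset A r X = {i\<in>{1..r}. A i \<subseteq> X}"

definition Ae :: "(nat \<Rightarrow> 'a set) \<Rightarrow> nat \<Rightarrow> 'a \<Rightarrow> 'a set \<Rightarrow> nat set" where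
  "Ae A r e X = {i\<in>Aset A r X. e \<in> A i}"

definition induced :: "nat set set \<Rightarrow> nat set \<Rightarrow> nat set set" where
  "induced Ed U = {ed\<in>Ed. ed \<subseteq> U}"

definition connected_graph :: "nat set \<Rightarrow> nat set set \<Rightarrow> bool" where
  "connected_graph U Ed \<longleftrightarrow> (\<forall>u\<in>U. \<forall>v\<in>U. (u, v) \<in> {(x, y). {x, y} \<in> Ed}\<^sup>*)"

definition acyclic_graph :: "nat set set \<Rightarrow> bool" where
  "acyclic_graph Ed \<longleftrightarrow> \<not> (\<exists>cs. distinct cs \<and> length cs \<ge> 3 \<and>
      (\<forall>k. Suc k < length cs \<longrightarrow> {cs ! k, cs ! Suc k} \<in> Ed) \<and> {last cs, hd cs} \<in> Ed)"

definition simple_graph_on :: "nat set \<Rightarrow> nat set set \<Rightarrow> bool" where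
  "simple_graph_on V Ed \<longleftrightarrow> (\<forall>ed\<in>Ed. \<exists>i j. i \<in> V \<and> j \<in> V \<and> i \<noteq> j \<and> ed = {i, j})"

definition presenting :: "'a set \<Rightarrow> ('a set \<Rightarrow> bool) \<Rightarrow> (nat \<Rightarrow> 'a set) \<Rightarrow> nat \<Rightarrow> 'a \<Rightarrow> nat set set \<Rightarrow> bool" where
  "presenting E ind A r e Ed \<longleftrightarrow> simple_graph_on (Ae A r e E) Ed \<and>
     (\<forall>i\<in>Ae A r e E. \<forall>j\<in>Ae A r e E. i \<noteq> j \<longrightarrow>
        (let U = Ae A r e (cl E ind (A i \<union> A j)) in connected_graph U (induced Ed U)))"

definition minimal_presenting :: "'a set \<Rightarrow> ('a set \<Rightarrow> bool) \<Rightarrow> (nat \<Rightarrow> 'a set) \<Rightarrow> nat \<Rightarrow> 'a \<Rightarrow> nat set set \<Rightarrow> bool" where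
  "minimal_presenting E ind A r e Ed \<longleftrightarrow> presenting E ind A r e Ed \<and>
     (\<forall>ed\<in>Ed. \<not> presenting E ind A r e (Ed - {ed}))"

function alpha :: "'a set \<Rightarrow> ('a set \<Rightarrow> bool) \<Rightarrow> 'a set \<Rightarrow> int" where
  "alpha E ind X = (if finite X then int (card X) - int (rank ind X)
      - (\<Sum>F\<in>{F. cyclic_flat E ind F \<and> F \<subset> X}. alpha E ind F) else 0)"
  by auto
termination
  by (relation "measure (\<lambda>(E, ind, X). card X)") (auto intro: psubset_card_mono)

end

theory Submission
  imports Defs
begin

locale matr =
  fixes E :: "'a set" and ind :: "'a set \<Rightarrow> bool"
  assumes m: "matroid E ind"
begin

lemma finE: "finite E" using m unfolding matroid_def by blast
lemma ind_empty: "ind {}" using m unfolding matroid_def by blast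
lemma ind_sub: "ind X \<Longrightarrow> X \<subseteq> E" using m unfolding matroid_def by blast
lemma ind_mono: "ind X \<Longrightarrow> Y \<subseteq> X \<Longrightarrow> ind Y" using m unfolding matroid_def by blast
lemma aug: "ind X \<Longrightarrow> ind Y \<Longrightarrow> card X < card Y \<Longrightarrow> \<exists>y\<in>Y - X. ind (insert y X)"
  using m unfolding matroid_def by blast
lemma ind_fin: "ind X \<Longrightarrow> finite X" using ind_sub finE finite_subset by blast

lemma rank_set_fin: "finite {card I | I. I \<subseteq> X \<and> ind I}"
proof -
  have "{card I | I. I \<subseteq> X \<and> ind I} \<subseteq> card ` Pow E" using ind_sub by blast
  then show ?thesis using finE finite_subset by blast
qed

lemma rank_ge: "I \<subseteq> X \<Longrightarrow> ind I \<Longrightarrow> card I \<le> rank ind X"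
  unfolding rank_def using rank_set_fin by (intro Max_ge) auto

lemma rank_obtain: "\<exists>I. I \<subseteq> X \<and> ind I \<and> card I = rank ind X"
proof -
  have "rank ind X \<in> {card I | I. I \<subseteq> X \<and> ind I}"
    unfolding rank_def using rank_set_fin ind_empty by (intro Max_in) auto
  then show ?thesis by auto
qed

lemma rank_mono: "X \<subseteq> Y \<Longrightarrow> rank ind X \<le> rank ind Y"
proof -
  assume "X \<subseteq> Y"
  obtain I where "I \<subseteq> X" "ind I" "card I = rank ind X" using rank_obtain by blast
  then show ?thesis using rank_ge[of I Y] \<open>X \<subseteq> Y\<close> by auto
qed

lemma rank_le_card: "finite X \<Longrightarrow> rank ind X \<le> card X"
proof -
  assume "finite X"
  obtain I where "I \<subseteq> X" "ind I" "card I = rank ind X" using rank_obtain by blast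
  then have "card I \<le> card X" using card_mono[OF \<open>finite X\<close>] by blast
  then show ?thesis using \<open>card I = rank ind X\<close> by simp
qed

lemma rank_ind: "ind X \<Longrightarrow> rank ind X = card X"
  using rank_ge[of X X] rank_le_card[of X] ind_fin by auto

lemma aug_max: "ind I \<Longrightarrow> I \<subseteq> X \<Longrightarrow> \<exists>J. I \<subseteq> J \<and> J \<subseteq> X \<and> ind J \<and> card J = rank ind X"
proof (induct "rank ind X - card I" arbitrary: I rule: less_induct)
  case less
  show ?case
  proof (cases "card I < rank ind X")
    case True
    obtain K where K: "K \<subseteq> X" "ind K" "card K = rank ind X" using rank_obtain by blast
    then obtain y where y: "y \<in> K - I" "ind (insert y I)" using aug[of I K] less True by auto
    have "card (insert y I) = card I + 1" using y ind_fin less by auto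
    then have "rank ind X - card (insert y I) < rank ind X - card I" using True by auto
    from less(1)[OF this y(2)] obtain J where "insert y I \<subseteq> J \<and> J \<subseteq> X \<and> ind J \<and> card J = rank ind X"
      using y K less by blast
    then show ?thesis by blast
  next
    case False
    then show ?thesis using less rank_ge[of I X] by (intro exI[of _ I]) auto
  qed
qed

lemma rank_insert_char:
  assumes "I \<subseteq> X" "ind I" "card I = rank ind X" "x \<notin> I"
  shows "rank ind (insert x X) = rank ind X \<longleftrightarrow> \<not> ind (insert x I)"
proof
  assume h: "rank ind (insert x X) = rank ind X"
  show "\<not> ind (insert x I)"
  proof
    assume "ind (insert x I)"
    then have "card (insert x I) \<le> rank ind (insert x X)" using assms by (intro rank_ge) auto
    moreover have "card (insert x I) = card I + 1" using assms ind_fin by auto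
    ultimately show False using h assms by auto
  qed
next
  assume h: "\<not> ind (insert x I)"
  show "rank ind (insert x X) = rank ind X"
  proof (rule ccontr)
    assume ne: "rank ind (insert x X) \<noteq> rank ind X"
    have "rank ind X \<le> rank ind (insert x X)" by (rule rank_mono) auto
    with ne have lt: "rank ind X < rank ind (insert x X)" by auto
    obtain J where J: "I \<subseteq> J" "J \<subseteq> insert x X" "ind J" "card J = rank ind (insert x X)"
      using aug_max[of I "insert x X"] assms by auto
    show False
    proof (cases "x \<in> J")
      case True
      then have "insert x I \<subseteq> J" using J by auto
      then show False using h J ind_mono by blast
    next
      case False
      then have "J \<subseteq> X" using J by auto
      then show False using rank_ge[of J X] J lt by auto
    qed
  qed
qed

lemma rank_insert_le: "rank ind (insert x X) \<le> rank ind X + 1"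
proof -
  obtain J where J: "J \<subseteq> insert x X" "ind J" "card J = rank ind (insert x X)" using rank_obtain by blast
  have "J - {x} \<subseteq> X" "ind (J - {x})" using J ind_mono by auto
  then have "card (J - {x}) \<le> rank ind X" using rank_ge by blast
  moreover have "card J \<le> card (J - {x}) + 1" using J ind_fin
    by (cases "x \<in> J") (auto simp: card_Diff_singleton)
  ultimately show ?thesis using J by auto
qed

lemma cl_sub: "X \<subseteq> E \<Longrightarrow> X \<subseteq> cl E ind X"
  unfolding cl_def by (simp add: insert_absorb subset_iff)

lemma cl_subE: "cl E ind X \<subseteq> E" unfolding cl_def by auto

lemma cl_mono:
  assumes XY: "X \<subseteq> Y" shows "cl E ind X \<subseteq> cl E ind Y"
proof
  fix x assume x: "x \<in> cl E ind X"
  then have xE: "x \<in> E" and rx: "rank ind (insert x X) = rank ind X" unfolding cl_def by auto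
  show "x \<in> cl E ind Y"
  proof (cases "x \<in> Y")
    case True
    then have "insert x Y = Y" by (rule insert_absorb)
    then show ?thesis using xE unfolding cl_def by simp
  next
    case False
    obtain J where J: "J \<subseteq> X" "ind J" "card J = rank ind X" using rank_obtain by blast
    obtain J' where J': "J \<subseteq> J'" "J' \<subseteq> Y" "ind J'" "card J' = rank ind Y"
      using aug_max[of J Y] J XY by blast
    have xJ: "x \<notin> J" using J False XY by blast
    have "\<not> ind (insert x J)" using rank_insert_char[OF J xJ] rx by simp
    then have n: "\<not> ind (insert x J')" using J'(1) ind_mono by blast
    have xJ': "x \<notin> J'" using J' False by blast
    have "rank ind (insert x Y) = rank ind Y" using rank_insert_char[OF J'(2-4) xJ'] n by simp
    then show ?thesis using xE unfolding cl_def by simp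
  qed
qed

lemma rank_cl_un: "rank ind (cl E ind X \<union> X) = rank ind X"
proof -
  obtain I where I: "I \<subseteq> X" "ind I" "card I = rank ind X" using rank_obtain by blast
  have "rank ind (cl E ind X \<union> X) \<le> card I"
  proof (rule ccontr)
    assume "\<not> rank ind (cl E ind X \<union> X) \<le> card I"
    then obtain J where J: "J \<subseteq> cl E ind X \<union> X" "ind J" "card I < card J"
      using rank_obtain by (metis not_le)
    then obtain y where y: "y \<in> J - I" "ind (insert y I)" using aug[OF I(2) J(2)] by auto
    have ci: "card (insert y I) = card I + 1" using y ind_fin I by auto
    show False
    proof (cases "y \<in> X")
      case True
      then show False using rank_ge[of "insert y I" X] I y ci by auto
    next
      case False
      then have "y \<in> cl E ind X" using y J by auto
      then have "rank ind (insert y X) = rank ind X" unfolding cl_def by auto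
      moreover have "card (insert y I) \<le> rank ind (insert y X)" using I y by (intro rank_ge) auto
      ultimately show False using ci I by auto
    qed
  qed
  moreover have "rank ind X \<le> rank ind (cl E ind X \<union> X)" by (rule rank_mono) auto
  ultimately show ?thesis using I by auto
qed

lemma cl_idem: "X \<subseteq> E \<Longrightarrow> cl E ind (cl E ind X) = cl E ind X"
proof
  assume XE: "X \<subseteq> E"
  have un: "cl E ind X \<union> X = cl E ind X" using cl_sub[OF XE] by auto
  show "cl E ind (cl E ind X) \<subseteq> cl E ind X"
  proof
    fix x assume "x \<in> cl E ind (cl E ind X)"
    then have xE: "x \<in> E" and r: "rank ind (insert x (cl E ind X)) = rank ind (cl E ind X)"
      unfolding cl_def by auto
    have "rank ind (insert x X) \<le> rank ind (insert x (cl E ind X))"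
      using cl_sub[OF XE] by (intro rank_mono) auto
    also have "\<dots> = rank ind X" using r rank_cl_un[of X] un by simp
    finally have a: "rank ind (insert x X) \<le> rank ind X" .
    have "rank ind X \<le> rank ind (insert x X)" by (rule rank_mono) auto
    with a have "rank ind (insert x X) = rank ind X" by simp
    then show "x \<in> cl E ind X" using xE unfolding cl_def by auto
  qed
  show "cl E ind X \<subseteq> cl E ind (cl E ind X)" using cl_sub cl_subE by blast
qed

lemma rank_cl: "X \<subseteq> E \<Longrightarrow> rank ind (cl E ind X) = rank ind X"
  using rank_cl_un[of X] cl_sub[of X] by (simp add: sup.absorb1)

lemma circuit_not_ind: "circuit E ind C \<Longrightarrow> \<not> ind C" unfolding circuit_def by auto

lemma circuit_cl: assumes "circuit E ind C" "x \<in> C" shows "x \<in> cl E ind (C - {x})"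
proof -
  have C: "C \<subseteq> E" "\<not> ind C" "ind (C - {x})" using assms unfolding circuit_def by auto
  have fC: "finite C" using C finE finite_subset by blast
  have r1: "rank ind (C - {x}) = card C - 1" using rank_ind[OF C(3)] assms fC by auto
  have "rank ind C < card C"
  proof -
    obtain I where I: "I \<subseteq> C" "ind I" "card I = rank ind C" using rank_obtain by blast
    have "I \<noteq> C" using I C by auto
    then have "card I < card C" using I fC by (meson psubsetI psubset_card_mono)
    then show ?thesis using I by auto
  qed
  moreover have "rank ind (C - {x}) \<le> rank ind C" by (rule rank_mono) auto
  ultimately have "rank ind C = rank ind (C - {x})" using r1 by auto
  moreover have "insert x (C - {x}) = C" using assms by auto
  ultimately show ?thesis using C assms unfolding cl_def by auto
qed

lemma dep_circuit: "D \<subseteq> E \<Longrightarrow> \<not> ind D \<Longrightarrow> \<exists>C\<subseteq>D. circuit E ind C"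
proof -
  assume a: "D \<subseteq> E" "\<not> ind D"
  have "finite D" using a finE finite_subset by blast
  then show ?thesis using a
proof (induct D rule: finite_psubset_induct)
  case (psubset D)
  show ?case
  proof (cases "\<forall>x\<in>D. ind (D - {x})")
    case True then show ?thesis using psubset unfolding circuit_def by auto
  next
    case False
    then obtain x where x: "x \<in> D" "\<not> ind (D - {x})" by auto
    then have "D - {x} \<subset> D" by auto
    from psubset(2)[OF this] x psubset(3) show ?thesis by blast
  qed
qed
qed

lemma cl_circuit:
  assumes "x \<in> cl E ind X" "x \<notin> X"
  shows "\<exists>C. circuit E ind C \<and> x \<in> C \<and> C \<subseteq> insert x X"
proof -
  obtain I where I: "I \<subseteq> X" "ind I" "card I = rank ind X" using rank_obtain by blast
  have xI: "x \<notin> I" using I assms by auto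
  have xE: "x \<in> E" "rank ind (insert x X) = rank ind X" using assms unfolding cl_def by auto
  have "\<not> ind (insert x I)" using rank_insert_char[OF I xI] xE by auto
  moreover have "insert x I \<subseteq> E" using xE ind_sub I by auto
  ultimately obtain C where C: "C \<subseteq> insert x I" "circuit E ind C" using dep_circuit by blast
  have "x \<in> C"
  proof (rule ccontr)
    assume "x \<notin> C" then have "C \<subseteq> I" using C by auto
    then show False using C I ind_mono circuit_not_ind by blast
  qed
  then show ?thesis using C I by auto
qed

lemma circuit_in_cl: "circuit E ind C \<Longrightarrow> x \<in> C \<Longrightarrow> C - {x} \<subseteq> X \<Longrightarrow> x \<in> cl E ind X"
  using circuit_cl cl_mono by blast

definition cycpart :: "'a set \<Rightarrow> 'a set" where
  "cycpart Z = \<Union>{C. circuit E ind C \<and> C \<subseteq> Z}"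

lemma cycpart_sub: "cycpart Z \<subseteq> Z" unfolding cycpart_def by auto

lemma nullity_cycpart:
  "Z \<subseteq> E \<Longrightarrow> int (card Z) - int (rank ind Z) = int (card (cycpart Z)) - int (rank ind (cycpart Z))"
proof -
  assume a: "Z \<subseteq> E"
  have "finite Z" using a finE finite_subset by blast
  then show ?thesis using a
proof (induct Z rule: finite_psubset_induct)
  case (psubset Z)
  show ?case
  proof (cases "cycpart Z = Z")
    case True then show ?thesis by simp
  next
    case False
    then obtain z where z: "z \<in> Z" "z \<notin> cycpart Z" using cycpart_sub by blast
    have zcl: "z \<notin> cl E ind (Z - {z})"
    proof
      assume "z \<in> cl E ind (Z - {z})"
      then obtain C where "circuit E ind C" "z \<in> C" "C \<subseteq> insert z (Z - {z})"
        using cl_circuit by blast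
      then have "z \<in> cycpart Z" using z unfolding cycpart_def by blast
      then show False using z by auto
    qed
    have zE: "z \<in> E" using z psubset by auto
    have ins: "insert z (Z - {z}) = Z" using z by auto
    have "rank ind Z \<noteq> rank ind (Z - {z})" using zcl zE ins unfolding cl_def by auto
    moreover have "rank ind Z \<le> rank ind (Z - {z}) + 1" using rank_insert_le[of z "Z - {z}"] ins by simp
    moreover have "rank ind (Z - {z}) \<le> rank ind Z" by (rule rank_mono) auto
    ultimately have r: "rank ind Z = rank ind (Z - {z}) + 1" by auto
    have cp: "cycpart (Z - {z}) = cycpart Z"
      unfolding cycpart_def using z unfolding cycpart_def by blast
    have fZ: "finite Z" using psubset by auto
    have "card Z = card (Z - {z}) + 1" using z fZ
      by (metis card_Suc_Diff1 Suc_eq_plus1)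
    moreover have "Z - {z} \<subset> Z" using z by auto
    from psubset(2)[OF this] psubset(3) have
      "int (card (Z - {z})) - int (rank ind (Z - {z})) = int (card (cycpart Z)) - int (rank ind (cycpart Z))"
      using cp by auto
    ultimately show ?thesis using r by auto
  qed
qed
qed

lemma cycpart_cyclic: "cycpart Z = \<Union>{C. circuit E ind C \<and> C \<subseteq> cycpart Z}"
  unfolding cycpart_def by blast

end

lemma rank_ge_gen:
  assumes "finite {card I | I. I \<subseteq> X \<and> P I}" "I \<subseteq> X" "P I"
  shows "card I \<le> rank P X"
proof -
  have "card I \<in> {card I | I. I \<subseteq> X \<and> P I}" using assms(2,3) by blast
  then show ?thesis unfolding rank_def using assms(1) by (rule Max_ge[rotated])
qed

lemma rank_obtain_gen:
  assumes "finite {card I | I. I \<subseteq> X \<and> P I}" "P {}"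
  shows "\<exists>I. I \<subseteq> X \<and> P I \<and> card I = rank P X"
proof -
  have "card {} \<in> {card I | I. I \<subseteq> X \<and> P I}"
    by (rule CollectI, rule exI[of _ "{}"]) (simp add: assms(2))
  then have ne: "{card I | I. I \<subseteq> X \<and> P I} \<noteq> {}" by (rule ex_in_conv[THEN iffD1, OF exI])
  have "rank P X \<in> {card I | I. I \<subseteq> X \<and> P I}"
    unfolding rank_def using Max_in[OF assms(1) ne] .
  then obtain I where "rank P X = card I" "I \<subseteq> X" "P I" by auto
  then show ?thesis by auto
qed

lemma fin_sets:
  assumes "\<And>I. P I \<Longrightarrow> I \<subseteq> E" "finite E"
  shows "finite {card I | I. I \<subseteq> X \<and> P I}"
proof -
  have "{card I | I. I \<subseteq> X \<and> P I} \<subseteq> {..card E}"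
  proof
    fix n assume "n \<in> {card I | I. I \<subseteq> X \<and> P I}"
    then obtain I where "n = card I" "P I" by blast
    then show "n \<in> {..card E}" using assms card_mono by fastforce
  qed
  then show ?thesis using finite_subset by blast
qed

context matr
begin

lemma basis_card: "basis ind B \<Longrightarrow> card B = rank ind E"
proof -
  assume b: "basis ind B"
  then have B: "ind B" "\<And>X. ind X \<Longrightarrow> B \<subseteq> X \<Longrightarrow> X = B" unfolding basis_def by auto
  obtain J where J: "B \<subseteq> J" "J \<subseteq> E" "ind J" "card J = rank ind E"
    using aug_max[of B E] B ind_sub by auto
  then show ?thesis using B by auto
qed

lemma basis_of: "ind B \<Longrightarrow> card B = rank ind E \<Longrightarrow> basis ind B"
proof -
  assume a: "ind B" "card B = rank ind E"
  have "X = B" if "ind X" "B \<subseteq> X" for X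
  proof -
    have "card X \<le> rank ind E" using that ind_sub rank_ge by blast
    moreover have "card B \<le> card X" using that ind_fin card_mono by blast
    ultimately show ?thesis using that a ind_fin card_subset_eq by (metis le_antisym)
  qed
  then show ?thesis using a unfolding basis_def by auto
qed

lemma dual_fin: "finite {card I | I. I \<subseteq> X \<and> dual_indep E ind I}"
  by (rule fin_sets[where E=E]) (auto simp: dual_indep_def finE)

lemma basis_ex: "\<exists>B. basis ind B"
proof -
  obtain J where "J \<subseteq> E" "ind J" "card J = rank ind E" using rank_obtain by blast
  then show ?thesis using basis_of by blast
qed

lemma dual_empty: "dual_indep E ind {}"
  unfolding dual_indep_def using basis_ex by blast

lemma dual_rank:
  assumes YE: "Y \<subseteq> E"
  shows "int (rank (dual_indep E ind) Y) = int (card Y) - int (rank ind E) + int (rank ind (E - Y))"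
proof -
  have fY: "finite Y" using YE finE finite_subset by blast
  have le: "int (rank (dual_indep E ind) Y) \<le> int (card Y) - int (rank ind E) + int (rank ind (E - Y))"
  proof -
    obtain D where D: "D \<subseteq> Y" "dual_indep E ind D" "card D = rank (dual_indep E ind) Y"
      using rank_obtain_gen[OF dual_fin dual_empty] by blast
    then obtain B where B: "basis ind B" "D \<inter> B = {}" unfolding dual_indep_def by blast
    have Bi: "ind B" using B unfolding basis_def by blast
    have fB: "finite B" using Bi ind_fin by blast
    have "D \<subseteq> Y - B" using D B by blast
    then have c1: "card D \<le> card (Y - B)" using fY by (intro card_mono) auto
    have c2: "card Y = card (Y \<inter> B) + card (Y - B)" using fY card_Int_Diff by blast
    have c3: "card B = card (Y \<inter> B) + card (B - Y)" using card_Int_Diff[OF fB, of Y] by (simp add: Int_commute)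
    have "B - Y \<subseteq> E - Y" using Bi ind_sub by blast
    moreover have "ind (B - Y)" using Bi ind_mono by blast
    ultimately have c4: "card (B - Y) \<le> rank ind (E - Y)" by (rule rank_ge)
    have c5: "card B = rank ind E" using basis_card B by blast
    show ?thesis using c1 c2 c3 c4 c5 D by linarith
  qed
  have ge: "int (card Y) - int (rank ind E) + int (rank ind (E - Y)) \<le> int (rank (dual_indep E ind) Y)"
  proof -
    obtain J where J: "J \<subseteq> E - Y" "ind J" "card J = rank ind (E - Y)" using rank_obtain by blast
    have "J \<subseteq> E" using J by blast
    then obtain B where B: "J \<subseteq> B" "B \<subseteq> E" "ind B" "card B = rank ind E"
      using aug_max[of J E] J by blast
    have bas: "basis ind B" using basis_of B by blast
    have fB: "finite B" using B ind_fin by blast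
    have BY: "B \<inter> (E - Y) = B - Y" using B by blast
    have "B - Y \<subseteq> E - Y" using B by blast
    moreover have "ind (B - Y)" using B ind_mono by blast
    ultimately have d1: "card (B - Y) \<le> rank ind (E - Y)" by (rule rank_ge)
    have "J \<subseteq> B - Y" using J B by blast
    then have d2: "card J \<le> card (B - Y)" using fB by (intro card_mono) auto
    have c2: "card Y = card (Y \<inter> B) + card (Y - B)" using fY card_Int_Diff by blast
    have c3: "card B = card (Y \<inter> B) + card (B - Y)" using card_Int_Diff[OF fB, of Y] by (simp add: Int_commute)
    have "dual_indep E ind (Y - B)" unfolding dual_indep_def using bas YE by blast
    then have c4: "card (Y - B) \<le> rank (dual_indep E ind) Y" by (intro rank_ge_gen[OF dual_fin]) auto
    show ?thesis using d1 d2 J c2 c3 c4 B by linarith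
  qed
  from le ge show ?thesis by linarith
qed

end

fun apath :: "(nat \<Rightarrow> 'a set) \<Rightarrow> ('a \<Rightarrow> nat) \<Rightarrow> nat \<Rightarrow> 'a list \<Rightarrow> bool" where
  "apath A f s [] = True"
| "apath A f s (x # xs) = (x \<in> A s \<and> apath A f (f x) xs)"

fun aend :: "('a \<Rightarrow> nat) \<Rightarrow> nat \<Rightarrow> 'a list \<Rightarrow> nat" where
  "aend f s [] = s"
| "aend f s (x # xs) = aend f (f x) xs"

lemma apath_append: "apath A f s (xs @ ys) \<longleftrightarrow> apath A f s xs \<and> apath A f (aend f s xs) ys"
  by (induct xs arbitrary: s) auto

lemma aend_append: "aend f s (xs @ ys) = aend f (aend f s xs) ys"
  by (induct xs arbitrary: s) auto

lemma aend_in: "set xs \<subseteq> I \<Longrightarrow> aend f s xs \<in> insert s (f ` I)"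
proof (induct xs arbitrary: s)
  case Nil then show ?case by simp
next
  case (Cons x xs)
  then have "aend f (f x) xs \<in> insert (f x) (f ` I)" by auto
  then show ?case using Cons by auto
qed

definition matching :: "(nat \<Rightarrow> 'a set) \<Rightarrow> nat \<Rightarrow> 'a set \<Rightarrow> ('a \<Rightarrow> nat) \<Rightarrow> bool" where
  "matching A r I f \<longleftrightarrow> inj_on f I \<and> (\<forall>x\<in>I. f x \<in> {1..r} \<and> x \<in> A (f x))"

lemma apath_cong: "\<forall>z\<in>set ys. f' z = f z \<Longrightarrow> apath A f' t ys = apath A f t ys"
  by (induct ys arbitrary: t) simp_all

lemma aend_cong: "\<forall>z\<in>set ys. f' z = f z \<Longrightarrow> aend f' t ys = aend f t ys"
  by (induct ys arbitrary: t) simp_all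

lemma aug_path:
  "matching A r I f \<Longrightarrow> s \<in> {1..r} \<Longrightarrow> s \<notin> f ` I \<Longrightarrow> apath A f s xs \<Longrightarrow> distinct xs \<Longrightarrow> set xs \<subseteq> I
   \<Longrightarrow> \<exists>g. matching A r I g \<and> aend f s xs \<notin> g ` I"
proof (induct xs arbitrary: f s)
  case Nil then show ?case by auto
next
  case (Cons x ys)
  define f' where "f' = f(x := s)"
  have xI: "x \<in> I" using Cons(7) by simp
  have xs: "x \<in> A s" using Cons(5) by simp
  have fm: "inj_on f I" "\<forall>z\<in>I. f z \<in> {1..r} \<and> z \<in> A (f z)" using Cons(2) unfolding matching_def by auto
  have inj': "inj_on f' I" unfolding f'_def by (rule inj_on_fun_updI[OF fm(1) Cons(4)])
  have val': "\<forall>z\<in>I. f' z \<in> {1..r} \<and> z \<in> A (f' z)"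
  proof
    fix z assume "z \<in> I"
    then show "f' z \<in> {1..r} \<and> z \<in> A (f' z)"
      using fm(2) Cons(3) xs unfolding f'_def by (cases "z = x") simp_all
  qed
  have m': "matching A r I f'" unfolding matching_def using inj' val' by blast
  have fx: "f x \<in> {1..r}" using fm(2) xI by blast
  have nf: "f x \<notin> f' ` I"
  proof
    assume "f x \<in> f' ` I"
    then obtain z where z: "z \<in> I" "f x = f' z" by blast
    show False
    proof (cases "z = x")
      case True then have "f x = s" using z unfolding f'_def by simp
      then show False using Cons(4) xI by blast
    next
      case False then have "f x = f z" using z unfolding f'_def by simp
      then have "x = z" using fm(1) xI z(1) unfolding inj_on_def by blast
      then show False using False by simp
    qed
  qed
  have eqf: "\<forall>z\<in>set ys. f' z = f z" using Cons(6) unfolding f'_def by auto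
  have ap: "apath A f' (f x) ys" using Cons(5) apath_cong[OF eqf] by simp
  have ae: "aend f' (f x) ys = aend f (f x) ys" using aend_cong[OF eqf] by simp
  have "distinct ys" "set ys \<subseteq> I" using Cons(6,7) by auto
  from Cons(1)[OF m' fx nf ap this] obtain g where "matching A r I g" "aend f' (f x) ys \<notin> g ` I"
    by blast
  then show ?case using ae by auto
qed

lemma pt_matching: "partial_transversal E A r X \<longleftrightarrow> X \<subseteq> E \<and> (\<exists>f. matching A r X f)"
  unfolding partial_transversal_def matching_def by auto

lemma pt_fin: "finite E \<Longrightarrow> finite {card I | I. I \<subseteq> X \<and> partial_transversal E A r I}"
  by (rule fin_sets[where E=E]) (auto simp: partial_transversal_def)

lemma pt_empty: "partial_transversal E A r {}" unfolding partial_transversal_def by auto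

lemma pt_upper:
  assumes fE: "finite E"
  shows "rank (partial_transversal E A r) Y \<le> card {i\<in>{1..r}. A i \<inter> Y \<noteq> {}}"
proof -
  obtain I where I: "I \<subseteq> Y" "partial_transversal E A r I" "card I = rank (partial_transversal E A r) Y"
    using rank_obtain_gen[OF pt_fin[OF fE] pt_empty] by blast
  then obtain f where f: "matching A r I f" unfolding pt_matching by auto
  have "f ` I \<subseteq> {i\<in>{1..r}. A i \<inter> Y \<noteq> {}}" using f I unfolding matching_def by auto
  then have "card (f ` I) \<le> card {i\<in>{1..r}. A i \<inter> Y \<noteq> {}}" by (intro card_mono) auto
  moreover have "card (f ` I) = card I" using f unfolding matching_def by (simp add: card_image)
  ultimately show ?thesis using I by auto
qed

lemma pt_cyclic:
  assumes fE: "finite E" and XE: "X \<subseteq> E"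
    and cyc: "\<forall>y\<in>X. rank (partial_transversal E A r) (X - {y}) = rank (partial_transversal E A r) X"
  shows "card {i\<in>{1..r}. A i \<inter> X \<noteq> {}} \<le> rank (partial_transversal E A r) X"
proof -
  let ?pt = "partial_transversal E A r"
  have fX: "finite X" using XE fE finite_subset by blast
  obtain I where I: "I \<subseteq> X" "?pt I" "card I = rank ?pt X"
    using rank_obtain_gen[OF pt_fin[OF fE] pt_empty] by blast
  then obtain f where f: "matching A r I f" unfolding pt_matching by auto
  have fI: "finite I" using I fX finite_subset by blast
  have sub: "{i\<in>{1..r}. A i \<inter> X \<noteq> {}} \<subseteq> f ` I"
  proof
    fix i0 assume i0: "i0 \<in> {i\<in>{1..r}. A i \<inter> X \<noteq> {}}"
    show "i0 \<in> f ` I"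
    proof (rule ccontr)
      assume ni: "i0 \<notin> f ` I"
      define S0 where "S0 = {aend f i0 xs | xs. apath A f i0 xs \<and> distinct xs \<and> set xs \<subseteq> I}"
      define R0 where "R0 = {x\<in>X. \<exists>s\<in>S0. x \<in> A s}"
      have i0S: "i0 \<in> S0" unfolding S0_def by (auto intro: exI[of _ "[]"])
      have i0r: "i0 \<in> {1..r}" using i0 by auto
      have R0I: "R0 \<subseteq> I"
      proof
        fix x assume x: "x \<in> R0"
        then obtain xs where xs: "apath A f i0 xs" "distinct xs" "set xs \<subseteq> I" "x \<in> A (aend f i0 xs)" "x \<in> X"
          unfolding R0_def S0_def by auto
        show "x \<in> I"
        proof (rule ccontr)
          assume xI: "x \<notin> I"
          obtain g where g: "matching A r I g" "aend f i0 xs \<notin> g ` I"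
            using aug_path[OF f i0r ni xs(1-3)] by auto
          have ar: "aend f i0 xs \<in> {1..r}" using aend_in[OF xs(3), of f i0] f i0r
            unfolding matching_def by auto
          define a where "a = aend f i0 xs"
          have gm: "inj_on g I" "\<forall>z\<in>I. g z \<in> {1..r} \<and> z \<in> A (g z)" using g(1) unfolding matching_def by auto
          have im: "(g(x := a)) ` I = g ` I" using xI by auto
          have inj1: "inj_on (g(x := a)) I" by (rule inj_on_fun_updI[OF gm(1)]) (use g(2) a_def in simp)
          have "a \<notin> (g(x := a)) ` I" using im g(2) a_def by simp
          then have inj2: "inj_on (g(x := a)) (insert x I)" using inj1 xI by simp
          have val: "\<forall>z\<in>insert x I. (g(x := a)) z \<in> {1..r} \<and> z \<in> A ((g(x := a)) z)"
            using gm(2) ar xs(4) xI a_def by auto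
          have "matching A r (insert x I) (g(x := a))" unfolding matching_def using inj2 val by blast
          moreover have xIX: "insert x I \<subseteq> X" using I xs by blast
          ultimately have "?pt (insert x I)" using XE unfolding pt_matching by blast
          then have "card (insert x I) \<le> rank ?pt X" using rank_ge_gen[OF pt_fin[OF fE] xIX] by blast
          then show False using I xI fI by simp
        qed
      qed
      have fR0: "f ` R0 \<subseteq> S0"
      proof
        fix t assume "t \<in> f ` R0"
        then obtain x where x: "x \<in> R0" "t = f x" by auto
        then obtain xs where xs: "apath A f i0 xs" "distinct xs" "set xs \<subseteq> I" "x \<in> A (aend f i0 xs)"
          unfolding R0_def S0_def by auto
        have xI: "x \<in> I" using x R0I by auto
        show "t \<in> S0"
        proof (cases "x \<in> set xs")
          case False
          have "apath A f i0 (xs @ [x])" using xs by (simp add: apath_append)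
          moreover have "aend f i0 (xs @ [x]) = f x" by (simp add: aend_append)
          ultimately show ?thesis using xs False xI x unfolding S0_def by (intro CollectI exI[of _ "xs @ [x]"]) auto
        next
          case True
          then obtain ys zs where yz: "xs = ys @ x # zs" by (meson split_list)
          have "apath A f i0 (ys @ [x])" using xs yz by (simp add: apath_append)
          moreover have "aend f i0 (ys @ [x]) = f x" by (simp add: aend_append)
          ultimately show ?thesis using xs yz x unfolding S0_def
            by (intro CollectI exI[of _ "ys @ [x]"]) auto
        qed
      qed
      obtain y where y: "y \<in> A i0" "y \<in> X" using i0 by auto
      have yR: "y \<in> R0" unfolding R0_def using y i0S by auto
      have "rank ?pt (X - {y}) = card I" using cyc y I by auto
      then obtain I' where I': "I' \<subseteq> X - {y}" "?pt I'" "card I' = card I"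
        using rank_obtain_gen[OF pt_fin[OF fE, where X="X - {y}" and A=A and r=r] pt_empty[of E A r]] by auto
      then obtain g where g: "matching A r I' g" unfolding pt_matching by auto
      define h where "h z = (if z \<in> R0 then f z else g z)" for z
      have gout: "g z \<notin> S0" if "z \<in> I' - R0" for z
        using that g I' unfolding matching_def R0_def by auto
      have "matching A r ((I' - R0) \<union> R0) h"
        unfolding matching_def
      proof (rule conjI)
        show "inj_on h (I' - R0 \<union> R0)"
          unfolding inj_on_def
        proof (intro ballI impI)
          fix u v assume uv: "u \<in> I' - R0 \<union> R0" "v \<in> I' - R0 \<union> R0" "h u = h v"
          show "u = v"
          proof (cases "u \<in> R0"; cases "v \<in> R0")
            assume "u \<in> R0" "v \<in> R0" then show ?thesis using uv f R0I unfolding h_def matching_def inj_on_def by auto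
          next
            assume a: "u \<in> R0" "v \<notin> R0"
            then have "h u \<in> S0" using fR0 unfolding h_def by auto
            moreover have "h v \<notin> S0" using gout[of v] a uv(2) unfolding h_def by simp
            ultimately show ?thesis using uv(3) by simp
          next
            assume a: "u \<notin> R0" "v \<in> R0"
            then have "h v \<in> S0" using fR0 unfolding h_def by auto
            moreover have "h u \<notin> S0" using gout[of u] a uv(1) unfolding h_def by simp
            ultimately show ?thesis using uv(3) by simp
          next
            assume "u \<notin> R0" "v \<notin> R0" then show ?thesis using uv g unfolding h_def matching_def inj_on_def by auto
          qed
        qed
      next
        show "\<forall>z\<in>I' - R0 \<union> R0. h z \<in> {1..r} \<and> z \<in> A (h z)"
          using f g R0I unfolding h_def matching_def by auto
      qed
      moreover have "I' - R0 \<union> R0 \<subseteq> X" using I' R0_def by auto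
      ultimately have "?pt (I' - R0 \<union> R0)" using XE unfolding pt_matching by auto
      then have c: "card (I' - R0 \<union> R0) \<le> card I" using I rank_ge_gen[OF pt_fin[OF fE] \<open>I' - R0 \<union> R0 \<subseteq> X\<close>]
        by simp
      have fR: "finite R0" using R0I fI finite_subset by blast
      have fI': "finite I'" using I' fX finite_subset by blast
      have "card (I' - R0 \<union> R0) = card (I' - R0) + card R0"
        using fR fI' by (intro card_Un_disjoint) auto
      moreover have "card I' = card (I' \<inter> R0) + card (I' - R0)" using fI' card_Int_Diff by blast
      moreover have "card (I' \<inter> R0) < card R0"
        using yR I' fR by (intro psubset_card_mono) auto
      ultimately show False using c I' by auto
    qed
  qed
  have "card {i\<in>{1..r}. A i \<inter> X \<noteq> {}} \<le> card (f ` I)" using sub fI by (intro card_mono) auto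
  also have "\<dots> \<le> card I" using card_image_le fI by blast
  finally show ?thesis using I by auto
qed


definition erel :: "nat set set \<Rightarrow> (nat \<times> nat) set" where
  "erel D = {(x, y). {x, y} \<in> D}"

fun chain :: "nat set set \<Rightarrow> nat list \<Rightarrow> bool" where
  "chain D [] = True"
| "chain D [x] = True"
| "chain D (x # y # zs) = ({x, y} \<in> D \<and> chain D (y # zs))"

lemma chain_nth: "chain D xs \<longleftrightarrow> (\<forall>k. Suc k < length xs \<longrightarrow> {xs ! k, xs ! Suc k} \<in> D)"
proof (induct D xs rule: chain.induct)
  case (1 D) then show ?case by simp
next
  case (2 D x) then show ?case by simp
next
  case (3 D x y zs)
  show ?case
  proof
    assume "chain D (x # y # zs)"
    then have h: "{x, y} \<in> D" "\<forall>k. Suc k < length (y # zs) \<longrightarrow> {(y # zs) ! k, (y # zs) ! Suc k} \<in> D"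
      using 3 by auto
    show "\<forall>k. Suc k < length (x # y # zs) \<longrightarrow> {(x # y # zs) ! k, (x # y # zs) ! Suc k} \<in> D"
    proof (intro allI impI)
      fix k assume k: "Suc k < length (x # y # zs)"
      show "{(x # y # zs) ! k, (x # y # zs) ! Suc k} \<in> D"
      proof (cases k)
        case 0 then show ?thesis using h by simp
      next
        case (Suc j) then show ?thesis using h(2)[rule_format, of j] k by simp
      qed
    qed
  next
    assume h: "\<forall>k. Suc k < length (x # y # zs) \<longrightarrow> {(x # y # zs) ! k, (x # y # zs) ! Suc k} \<in> D"
    have "{x, y} \<in> D" using h[rule_format, of 0] by simp
    moreover have "\<forall>k. Suc k < length (y # zs) \<longrightarrow> {(y # zs) ! k, (y # zs) ! Suc k} \<in> D"
    proof (intro allI impI)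
      fix k assume "Suc k < length (y # zs)"
      then show "{(y # zs) ! k, (y # zs) ! Suc k} \<in> D" using h[rule_format, of "Suc k"] by simp
    qed
    ultimately show "chain D (x # y # zs)" using 3 by simp
  qed
qed

lemma chain_snoc: "chain D (xs @ [z]) \<longleftrightarrow> chain D xs \<and> (xs \<noteq> [] \<longrightarrow> {last xs, z} \<in> D)"
  by (induct D xs rule: chain.induct) auto

lemma chain_prefix: "chain D (ys @ zs) \<Longrightarrow> chain D ys"
  by (induct D ys rule: chain.induct) (auto simp: neq_Nil_conv)

lemma chain_mono: "chain D xs \<Longrightarrow> D \<subseteq> D' \<Longrightarrow> chain D' xs"
  by (induct D xs rule: chain.induct) auto

lemma path_ex:
  assumes "(a, b) \<in> (erel D)\<^sup>*"
  shows "\<exists>xs. xs \<noteq> [] \<and> distinct xs \<and> hd xs = a \<and> last xs = b \<and> chain D xs"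
  using assms
proof (induct rule: rtrancl_induct)
  case base
  then show ?case by (intro exI[of _ "[a]"]) simp
next
  case (step y z)
  then obtain xs where xs: "xs \<noteq> []" "distinct xs" "hd xs = a" "last xs = y" "chain D xs" by blast
  have yz: "{y, z} \<in> D" using step(2) unfolding erel_def by simp
  show ?case
  proof (cases "z \<in> set xs")
    case True
    then obtain ys zs where yzs: "xs = ys @ z # zs" by (meson split_list)
    have "chain D (ys @ [z])" using xs(5) yzs chain_prefix[of D "ys @ [z]" zs] by simp
    moreover have "distinct (ys @ [z])" using xs(2) yzs by simp
    moreover have "hd (ys @ [z]) = a" using xs(3) yzs by (cases ys) auto
    ultimately show ?thesis by (intro exI[of _ "ys @ [z]"]) simp
  next
    case False
    have "chain D (xs @ [z])" using xs yz by (simp add: chain_snoc)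
    moreover have "distinct (xs @ [z])" using xs(2) False by simp
    moreover have "hd (xs @ [z]) = a" using xs(1,3) by simp
    ultimately show ?thesis by (intro exI[of _ "xs @ [z]"]) simp
  qed
qed

lemma acyclic_mono: "acyclic_graph D' \<Longrightarrow> D \<subseteq> D' \<Longrightarrow> acyclic_graph D"
  unfolding acyclic_graph_def by blast

lemma no_path_if_acyclic:
  assumes ac: "acyclic_graph (insert {a, b} D)" and nd: "{a, b} \<notin> D" and ab: "a \<noteq> b"
  shows "(a, b) \<notin> (erel D)\<^sup>*"
proof
  assume "(a, b) \<in> (erel D)\<^sup>*"
  then obtain xs where xs: "xs \<noteq> []" "distinct xs" "hd xs = a" "last xs = b" "chain D xs"
    using path_ex by blast
  have l2: "length xs \<noteq> 1"
  proof
    assume "length xs = 1" then obtain x where "xs = [x]" by (metis One_nat_def length_0_conv length_Suc_conv)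
    then show False using xs ab by simp
  qed
  have l3: "length xs \<noteq> 2"
  proof
    assume "length xs = 2" then obtain x y where "xs = [x, y]"
      by (metis One_nat_def Suc_1 length_0_conv length_Suc_conv)
    then show False using xs nd by simp
  qed
  have "length xs > 0" using xs(1) by simp
  then have "length xs \<ge> 3" using l2 l3 by arith
  moreover have "\<forall>k. Suc k < length xs \<longrightarrow> {xs ! k, xs ! Suc k} \<in> insert {a, b} D"
    using xs(5) unfolding chain_nth by blast
  moreover have "{last xs, hd xs} \<in> insert {a, b} D" using xs by (simp add: insert_commute)
  ultimately show False using ac xs(2) unfolding acyclic_graph_def by blast
qed

lemma sym_erel: "sym (erel D)" unfolding erel_def sym_def by (simp add: insert_commute)

lemma erel_insert: "erel (insert {a, b} D) = erel D \<union> {(a, b), (b, a)}"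
  unfolding erel_def by (auto simp: doubleton_eq_iff)

lemma rtrancl_add_edge:
  assumes sR: "sym R"
  shows "(x, y) \<in> (R \<union> {(a, b), (b, a)})\<^sup>* \<longleftrightarrow>
    (x, y) \<in> R\<^sup>* \<or> (x \<in> R\<^sup>* `` {a} \<union> R\<^sup>* `` {b} \<and> y \<in> R\<^sup>* `` {a} \<union> R\<^sup>* `` {b})"
proof -
  have sR': "sym (R\<^sup>*)" using sR by (rule sym_rtrancl)
  let ?K = "R\<^sup>* `` {a} \<union> R\<^sup>* `` {b}"
  let ?R' = "R \<union> {(a, b), (b, a)}"
  have sub: "R\<^sup>* \<subseteq> ?R'\<^sup>*" by (rule rtrancl_mono) blast
  show ?thesis
  proof
    assume "(x, y) \<in> ?R'\<^sup>*"
    then show "(x, y) \<in> R\<^sup>* \<or> (x \<in> ?K \<and> y \<in> ?K)"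
    proof (induct rule: rtrancl_induct)
      case base then show ?case by simp
    next
      case (step y z)
      show ?case
      proof (cases "(y, z) \<in> R")
        case True
        from step(3) show ?thesis
        proof
          assume "(x, y) \<in> R\<^sup>*" then show ?thesis using True by (meson rtrancl.rtrancl_into_rtrancl)
        next
          assume "x \<in> ?K \<and> y \<in> ?K"
          then have "z \<in> ?K" using True by (auto intro: rtrancl.rtrancl_into_rtrancl)
          then show ?thesis using \<open>x \<in> ?K \<and> y \<in> ?K\<close> by blast
        qed
      next
        case False
        then have yz: "(y = a \<and> z = b) \<or> (y = b \<and> z = a)" using step(2) by blast
        then have zK: "z \<in> ?K" by blast
        from step(3) show ?thesis
        proof
          assume h: "(x, y) \<in> R\<^sup>*"
          then have "(y, x) \<in> R\<^sup>*" using sR' unfolding sym_def by blast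
          then have "x \<in> ?K" using yz by blast
          then show ?thesis using zK by blast
        next
          assume "x \<in> ?K \<and> y \<in> ?K" then show ?thesis using zK by blast
        qed
      qed
    qed
  next
    assume h: "(x, y) \<in> R\<^sup>* \<or> (x \<in> ?K \<and> y \<in> ?K)"
    have ab: "(a, b) \<in> ?R'\<^sup>*" "(b, a) \<in> ?R'\<^sup>*" by auto
    have toa: "(u, a) \<in> ?R'\<^sup>*" if "u \<in> ?K" for u
    proof -
      from that show ?thesis
      proof
        assume "u \<in> R\<^sup>* `` {a}"
        then have "(u, a) \<in> R\<^sup>*" using sR' unfolding sym_def by blast
        then show ?thesis using sub by blast
      next
        assume "u \<in> R\<^sup>* `` {b}"
        then have "(u, b) \<in> R\<^sup>*" using sR' unfolding sym_def by blast
        then have "(u, b) \<in> ?R'\<^sup>*" using sub by blast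
        then show ?thesis using ab(2) by (rule rtrancl_trans)
      qed
    qed
    from h show "(x, y) \<in> ?R'\<^sup>*"
    proof
      assume "(x, y) \<in> R\<^sup>*" then show ?thesis using sub by blast
    next
      assume h2: "x \<in> ?K \<and> y \<in> ?K"
      then have "(x, a) \<in> ?R'\<^sup>*" "(y, a) \<in> ?R'\<^sup>*" using toa by auto
      moreover have "sym (?R'\<^sup>*)" by (rule sym_rtrancl) (use sR in \<open>auto simp: sym_def\<close>)
      ultimately show ?thesis by (meson rtrancl_trans symD)
    qed
  qed
qed

definition cls :: "nat set set \<Rightarrow> nat \<Rightarrow> nat set" where
  "cls D v = (erel D)\<^sup>* `` {v}"

lemma cls_eq: "(u, v) \<in> (erel D)\<^sup>* \<Longrightarrow> cls D u = cls D v"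
proof -
  assume h: "(u, v) \<in> (erel D)\<^sup>*"
  have s: "sym ((erel D)\<^sup>*)" using sym_erel by (rule sym_rtrancl)
  have h': "(v, u) \<in> (erel D)\<^sup>*" using h s unfolding sym_def by blast
  show ?thesis unfolding cls_def using h h' by (meson Image_singleton_iff rtrancl_trans subsetI subset_antisym)
qed

lemma cls_self: "v \<in> cls D v" unfolding cls_def by simp

lemma forest_count:
  assumes fV: "finite V" and DV: "\<forall>ed\<in>D. \<exists>a b. a \<in> V \<and> b \<in> V \<and> a \<noteq> b \<and> ed = {a, b}"
    and ac: "acyclic_graph D"
  shows "card (cls D ` V) + card D = card V"
proof -
  have "D \<subseteq> Pow V"
  proof
    fix ed assume "ed \<in> D"
    then obtain a b where "a \<in> V" "b \<in> V" "ed = {a, b}" using DV by meson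
    then show "ed \<in> Pow V" by simp
  qed
  then have fD: "finite D" using fV finite_subset by (simp add: finite_subset)
  show ?thesis using fD DV ac
  proof (induct D rule: finite_induct)
    case empty
    have "cls {} ` V = (\<lambda>v. {v}) ` V" unfolding cls_def erel_def by auto
    moreover have "card ((\<lambda>v. {v}) ` V) = card V" by (rule card_image) (auto simp: inj_on_def)
    ultimately show ?case by simp
  next
    case (insert ed D)
    obtain a b where ab: "a \<in> V" "b \<in> V" "a \<noteq> b" "ed = {a, b}" using insert(4) by blast
    have acD: "acyclic_graph D" using insert(5) acyclic_mono by blast
    have IH: "card (cls D ` V) + card D = card V" using insert(3,4) acD by blast
    let ?R = "(erel D)\<^sup>*"
    have nab: "(a, b) \<notin> ?R" using no_path_if_acyclic[of a b D] insert(2,5) ab by simp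
    have s: "sym ?R" using sym_erel by (rule sym_rtrancl)
    define K where "K = cls D a \<union> cls D b"
    have clsD': "cls (insert ed D) v = (if v \<in> K then K else cls D v)" for v
    proof -
      have "cls (insert ed D) v = {y. (v, y) \<in> ?R \<or> (v \<in> K \<and> y \<in> K)}"
        unfolding cls_def ab(4) erel_insert K_def
        using rtrancl_add_edge[OF sym_erel[of D], where x=v and a=a and b=b] by (auto simp: cls_def)
      also have "\<dots> = (if v \<in> K then K else cls D v)"
      proof (cases "v \<in> K")
        case True
        then have "cls D v = cls D a \<or> cls D v = cls D b"
          unfolding K_def cls_def using s cls_eq unfolding sym_def cls_def by blast
        then have "cls D v \<subseteq> K" unfolding K_def by blast
        then show ?thesis using True unfolding cls_def by auto
      next
        case False then show ?thesis unfolding cls_def by auto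
      qed
      finally show ?thesis .
    qed
    have aK: "a \<in> K" "b \<in> K" unfolding K_def using cls_self by auto
    have neq: "cls D a \<noteq> cls D b" using nab cls_self[of b D] unfolding cls_def by auto
    have Knot: "K \<notin> cls D ` V"
    proof
      assume "K \<in> cls D ` V"
      then obtain v where "K = cls D v" by blast
      then have "(v, a) \<in> ?R" "(v, b) \<in> ?R" using aK unfolding cls_def by auto
      then have "(a, b) \<in> ?R" using s unfolding sym_def by (meson rtrancl_trans)
      then show False using nab by blast
    qed
    have eq: "cls (insert ed D) ` V = insert K (cls D ` V - {cls D a, cls D b})"
    proof
      show "cls (insert ed D) ` V \<subseteq> insert K (cls D ` V - {cls D a, cls D b})"
      proof
        fix C assume "C \<in> cls (insert ed D) ` V"
        then obtain v where v: "v \<in> V" "C = cls (insert ed D) v" by blast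
        show "C \<in> insert K (cls D ` V - {cls D a, cls D b})"
        proof (cases "v \<in> K")
          case True then show ?thesis using v clsD' by simp
        next
          case False
          then have "cls D v \<noteq> cls D a" "cls D v \<noteq> cls D b" using cls_self[of v D] unfolding K_def by auto
          then show ?thesis using v clsD' False by auto
        qed
      qed
    next
      show "insert K (cls D ` V - {cls D a, cls D b}) \<subseteq> cls (insert ed D) ` V"
      proof
        fix C assume C: "C \<in> insert K (cls D ` V - {cls D a, cls D b})"
        show "C \<in> cls (insert ed D) ` V"
        proof (cases "C = K")
          case True
          then have "C = cls (insert ed D) a" using clsD' aK by simp
          then show ?thesis using ab by blast
        next
          case False
          then obtain v where v: "v \<in> V" "C = cls D v" "C \<noteq> cls D a" "C \<noteq> cls D b" using C by blast
          have "v \<notin> K"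
          proof
            assume "v \<in> K"
            then have "(a, v) \<in> ?R \<or> (b, v) \<in> ?R" unfolding K_def cls_def by auto
            then show False using v cls_eq by metis
          qed
          then show ?thesis using v clsD' by auto
        qed
      qed
    qed
    have fC: "finite (cls D ` V)" using fV by simp
    have inC: "cls D a \<in> cls D ` V" "cls D b \<in> cls D ` V" using ab by auto
    have c2: "card (cls D ` V) \<ge> 2"
    proof -
      have "{cls D a, cls D b} \<subseteq> cls D ` V" using inC by blast
      then have "card {cls D a, cls D b} \<le> card (cls D ` V)" using fC by (rule card_mono[rotated])
      then show ?thesis using neq by simp
    qed
    have c1: "card (cls D ` V - {cls D a, cls D b}) = card (cls D ` V) - 2"
      using inC neq fC by (simp add: card_Diff_subset)
    have "card (cls (insert ed D) ` V) = card (cls D ` V - {cls D a, cls D b}) + 1"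
      using eq Knot fC by simp
    then have "card (cls (insert ed D) ` V) = card (cls D ` V) - 1"
      using c1 c2 by arith
    moreover have "card (insert ed D) = card D + 1" using insert(1,2) by simp
    ultimately show ?case using IH c2 by arith
  qed
qed

lemma tree_card:
  assumes fV: "finite V" and ne: "V \<noteq> {}"
    and DV: "\<forall>ed\<in>D. \<exists>a b. a \<in> V \<and> b \<in> V \<and> a \<noteq> b \<and> ed = {a, b}"
    and ac: "acyclic_graph D" and con: "connected_graph V D"
  shows "card D = card V - 1"
proof -
  obtain v0 where v0: "v0 \<in> V" using ne by blast
  have "cls D ` V = {cls D v0}"
  proof -
    have "cls D v = cls D v0" if "v \<in> V" for v
      using con that v0 unfolding connected_graph_def erel_def[symmetric] by (metis cls_eq)
    then show ?thesis using v0 by blast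
  qed
  then show ?thesis using forest_count[OF fV DV ac] by simp
qed


locale lset = matr E ind for E :: "'a set" and ind +
  fixes A :: "nat \<Rightarrow> 'a set" and r :: nat and e :: 'a and Ed :: "nat set set"
  assumes dt: "\<forall>X. dual_indep E ind X \<longleftrightarrow> partial_transversal E A r X"
    and r_def: "r = rank (dual_indep E ind) E"
    and mp: "maximal_presentation E ind A r"
    and eE: "e \<in> E"
    and G: "minimal_presenting E ind A r e Ed"
begin

abbreviation "E' \<equiv> E - {e}"
abbreviation "d \<equiv> del_indep ind e"

lemma rank_del: "rank d X = rank ind (X - {e})"
proof -
  have "{card I | I. I \<subseteq> X \<and> d I} = {card I | I. I \<subseteq> X - {e} \<and> ind I}"
    unfolding del_indep_def by blast
  then show ?thesis unfolding rank_def by simp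
qed

lemma cl_del: "X \<subseteq> E' \<Longrightarrow> cl E' d X = cl E ind X - {e}"
proof -
  assume X: "X \<subseteq> E'"
  have X': "X - {e} = X" using X by blast
  have "insert x X - {e} = insert x X" if "x \<noteq> e" for x using that X by blast
  then show ?thesis unfolding cl_def rank_del X' by auto
qed

lemma circuit_del: "circuit E' d C \<longleftrightarrow> circuit E ind C \<and> e \<notin> C"
  unfolding circuit_def del_indep_def by blast

lemma cf_del: "cyclic_flat E' d F \<longleftrightarrow> F \<subseteq> E' \<and> cl E ind F - {e} = F \<and> F = \<Union>{C. circuit E ind C \<and> C \<subseteq> F}"
proof
  assume h: "cyclic_flat E' d F"
  then have F: "F \<subseteq> E'" "cl E' d F = F" unfolding cyclic_flat_def flat_def by auto
  have "F = \<Union>{C. circuit E' d C \<and> C \<subseteq> F}" using h unfolding cyclic_flat_def by simp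
  moreover have "{C. circuit E' d C \<and> C \<subseteq> F} = {C. circuit E ind C \<and> C \<subseteq> F}"
    using F(1) by (auto simp: circuit_del)
  ultimately show "F \<subseteq> E' \<and> cl E ind F - {e} = F \<and> F = \<Union>{C. circuit E ind C \<and> C \<subseteq> F}"
    using F cl_del by simp
next
  assume h: "F \<subseteq> E' \<and> cl E ind F - {e} = F \<and> F = \<Union>{C. circuit E ind C \<and> C \<subseteq> F}"
  have "{C. circuit E' d C \<and> C \<subseteq> F} = {C. circuit E ind C \<and> C \<subseteq> F}"
    using h by (auto simp: circuit_del)
  then show "cyclic_flat E' d F" unfolding cyclic_flat_def flat_def using h cl_del by simp
qed

lemma cl_del_sub: "X \<subseteq> E' \<Longrightarrow> X \<subseteq> cl E' d X"
  using cl_del cl_sub by blast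

lemma A_cf: "i \<in> {1..r} \<Longrightarrow> cyclic_flat E ind (A i)"
  using mp unfolding maximal_presentation_def by blast

lemma A_sub: "i \<in> {1..r} \<Longrightarrow> A i \<subseteq> E"
  using A_cf unfolding cyclic_flat_def flat_def by blast

lemma A_cl: "i \<in> {1..r} \<Longrightarrow> cl E ind (A i) = A i"
  using A_cf unfolding cyclic_flat_def flat_def by blast

lemma A_circ: "i \<in> {1..r} \<Longrightarrow> x \<in> A i \<Longrightarrow> \<exists>C. circuit E ind C \<and> x \<in> C \<and> C \<subseteq> A i"
proof -
  assume "i \<in> {1..r}" "x \<in> A i"
  then have "x \<in> \<Union>{C. circuit E ind C \<and> C \<subseteq> A i}" using A_cf unfolding cyclic_flat_def by blast
  then show ?thesis by blast
qed

lemma e_cl: "i \<in> {1..r} \<Longrightarrow> e \<in> A i \<Longrightarrow> A i \<subseteq> insert e X \<Longrightarrow> e \<in> cl E ind X"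
proof -
  assume a: "i \<in> {1..r}" "e \<in> A i" "A i \<subseteq> insert e X"
  obtain C where C: "circuit E ind C" "e \<in> C" "C \<subseteq> A i" using A_circ a by blast
  have "C - {e} \<subseteq> X" using C a by blast
  then show ?thesis using circuit_in_cl C by blast
qed

lemma dual_eq: "dual_indep E ind = partial_transversal E A r"
  using dt by (intro ext) simp

lemma rN: "Y \<subseteq> E \<Longrightarrow> int (rank (partial_transversal E A r) Y) = int (card Y) - int (rank ind E) + int (rank ind (E - Y))"
proof -
  assume "Y \<subseteq> E"
  from dual_rank[OF this] show ?thesis unfolding dual_eq .
qed

lemma r_val: "int r = int (card E) - int (rank ind E)"
proof -
  have h: "r = rank (partial_transversal E A r) E" using r_def unfolding dual_eq .
  have z: "rank ind (E - E) = 0" using rank_ind[OF ind_empty] by simp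
  have "int (rank (partial_transversal E A r) E) = int (card E) - int (rank ind E)"
    using rN[of E] z by simp
  moreover have "int r = int (rank (partial_transversal E A r) E)" using h by (rule arg_cong)
  ultimately show ?thesis by linarith
qed

lemma Aset_compl: "X \<subseteq> E \<Longrightarrow> {i\<in>{1..r}. A i \<inter> (E - X) \<noteq> {}} = {1..r} - Aset A r X"
  unfolding Aset_def using A_sub by blast

lemma card_compl: "card ({1..r} - Aset A r X) = r - card (Aset A r X)"
proof -
  have "Aset A r X \<subseteq> {1..r}" unfolding Aset_def by blast
  then show ?thesis by (simp add: card_Diff_subset finite_subset)
qed

lemma Aset_le_r: "card (Aset A r X) \<le> r"
proof -
  have "Aset A r X \<subseteq> {1..r}" unfolding Aset_def by blast
  then show ?thesis using card_mono[of "{1..r}" "Aset A r X"] by simp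
qed

lemma N1: "X \<subseteq> E \<Longrightarrow> int (card (Aset A r X)) \<le> int (card X) - int (rank ind X)"
proof -
  assume X: "X \<subseteq> E"
  have "rank (partial_transversal E A r) (E - X) \<le> card {i\<in>{1..r}. A i \<inter> (E - X) \<noteq> {}}"
    using pt_upper finE by blast
  then have h: "rank (partial_transversal E A r) (E - X) \<le> r - card (Aset A r X)"
    using Aset_compl[OF X] card_compl by simp
  have "int (rank (partial_transversal E A r) (E - X)) = int (card (E - X)) - int (rank ind E) + int (rank ind X)"
    using rN[of "E - X"] X by (simp add: double_diff)
  moreover have "int (card (E - X)) = int (card E) - int (card X)"
    using X finE by (simp add: card_Diff_subset finite_subset of_nat_diff card_mono)
  moreover have "int (r - card (Aset A r X)) = int r - int (card (Aset A r X))"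
    using Aset_le_r by simp
  ultimately show ?thesis using h r_val by linarith
qed

lemma N2: "cyclic_flat E ind P \<Longrightarrow> int (card P) - int (rank ind P) \<le> int (card (Aset A r P))"
proof -
  assume cf: "cyclic_flat E ind P"
  have P: "P \<subseteq> E" "cl E ind P = P" using cf unfolding cyclic_flat_def flat_def by auto
  let ?pt = "partial_transversal E A r"
  have cyc: "\<forall>y\<in>E - P. rank ?pt (E - P - {y}) = rank ?pt (E - P)"
  proof
    fix y assume y: "y \<in> E - P"
    have "y \<notin> cl E ind P" using P y by blast
    then have "rank ind (insert y P) \<noteq> rank ind P" using y unfolding cl_def by blast
    moreover have "rank ind (insert y P) \<le> rank ind P + 1" by (rule rank_insert_le)
    moreover have "rank ind P \<le> rank ind (insert y P)" by (rule rank_mono) blast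
    ultimately have r1: "rank ind (insert y P) = rank ind P + 1" by linarith
    have e1: "E - (E - P - {y}) = insert y P" using y P by blast
    have e2: "E - (E - P) = P" using P by blast
    have c1: "card (E - P - {y}) + 1 = card (E - P)" using y finE
      by (metis Suc_eq_plus1 card_Suc_Diff1 finite_Diff)
    have "int (rank ?pt (E - P - {y})) = int (card (E - P - {y})) - int (rank ind E) + int (rank ind (insert y P))"
      using rN[OF Diff_subset[THEN subset_trans, OF Diff_subset]] e1 by simp
    moreover have "int (rank ?pt (E - P)) = int (card (E - P)) - int (rank ind E) + int (rank ind P)"
      using rN[OF Diff_subset] e2 by simp
    ultimately show "rank ?pt (E - P - {y}) = rank ?pt (E - P)" using r1 c1 by linarith
  qed
  have "card {i\<in>{1..r}. A i \<inter> (E - P) \<noteq> {}} \<le> rank ?pt (E - P)"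
    using pt_cyclic[OF finE _ cyc] by blast
  then have h: "r - card (Aset A r P) \<le> rank ?pt (E - P)"
    using Aset_compl[OF P(1)] card_compl by simp
  have "int (rank ?pt (E - P)) = int (card (E - P)) - int (rank ind E) + int (rank ind P)"
    using rN[of "E - P"] P by (simp add: double_diff)
  moreover have "int (card (E - P)) = int (card E) - int (card P)"
    using P finE by (simp add: card_Diff_subset finite_subset of_nat_diff card_mono)
  moreover have "int (r - card (Aset A r P)) = int r - int (card (Aset A r P))"
    using Aset_le_r by simp
  ultimately show ?thesis using h r_val by linarith
qed

end

context lset
begin

lemma Ae_mem: "i \<in> Ae A r e X \<Longrightarrow> i \<in> {1..r} \<and> e \<in> A i \<and> A i \<subseteq> X"
  unfolding Ae_def Aset_def by blast

lemma keyK: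
  assumes i: "i \<in> Ae A r e E" and j: "j \<in> Ae A r e E" and ij: "i \<noteq> j"
    and x: "x \<in> A i \<union> A j" "x \<noteq> e"
  shows "\<exists>C. circuit E ind C \<and> x \<in> C \<and> C \<subseteq> cl E ind (A i \<union> A j) - {e}"
proof (rule ccontr)
  assume H: "\<not> (\<exists>C. circuit E ind C \<and> x \<in> C \<and> C \<subseteq> cl E ind (A i \<union> A j) - {e})"
  have ir: "i \<in> {1..r}" "e \<in> A i" "A i \<subseteq> E" using Ae_mem[OF i] by auto
  have jr: "j \<in> {1..r}" "e \<in> A j" "A j \<subseteq> E" using Ae_mem[OF j] by auto
  define X where "X = A i \<union> A j"
  define W where "W = cl E ind X"
  define Y where "Y = W - {e}"
  have XE: "X \<subseteq> E" using ir jr unfolding X_def by blast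
  have XW: "X \<subseteq> W" using cl_sub[OF XE] unfolding W_def by blast
  have WE: "W \<subseteq> E" unfolding W_def by (rule cl_subE)
  have eW: "e \<in> W" using XW ir unfolding X_def by blast
  have xW: "x \<in> W" using XW x unfolding X_def by blast
  have xY: "x \<in> Y" using xW x unfolding Y_def by blast
  have H': "\<not> (\<exists>C. circuit E ind C \<and> x \<in> C \<and> C \<subseteq> Y)" using H unfolding X_def W_def Y_def by simp
  have AiX: "A i \<subseteq> insert e (X - {e})" unfolding X_def by blast
  have ecX: "e \<in> cl E ind (X - {e})" using e_cl[OF ir(1,2) AiX] .
  have XeY: "X - {e} \<subseteq> Y" using XW unfolding Y_def by blast
  have ecY: "e \<in> cl E ind Y" using cl_mono[OF XeY] ecX by blast
  have a: "x \<notin> cl E ind (Y - {x})"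
  proof
    assume "x \<in> cl E ind (Y - {x})"
    then obtain C where "circuit E ind C" "x \<in> C" "C \<subseteq> insert x (Y - {x})" using cl_circuit by blast
    moreover have "insert x (Y - {x}) = Y" using xY by blast
    ultimately show False using H' by blast
  qed
  have insY: "insert x (Y - {x}) = Y" using xY by blast
  have xE: "x \<in> E" using xW WE by blast
  have "rank ind Y \<noteq> rank ind (Y - {x})" using a xE insY unfolding cl_def by auto
  moreover have "rank ind Y \<le> rank ind (Y - {x}) + 1" using rank_insert_le[of x "Y - {x}"] insY by simp
  moreover have "rank ind (Y - {x}) \<le> rank ind Y" by (rule rank_mono) blast
  ultimately have b: "rank ind Y = rank ind (Y - {x}) + 1" by linarith
  have insW: "insert e Y = W" using eW unfolding Y_def by blast
  have c: "rank ind W = rank ind Y" using ecY insW unfolding cl_def by auto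
  have "x \<in> cl E ind (W - {x})"
  proof -
    obtain k where k: "k \<in> {1..r}" "x \<in> A k" "A k \<subseteq> X" using x ir jr unfolding X_def by blast
    obtain C where C: "circuit E ind C" "x \<in> C" "C \<subseteq> A k" using A_circ k by blast
    have "C - {x} \<subseteq> W - {x}" using C k XW by blast
    then show ?thesis using circuit_in_cl C by blast
  qed
  moreover have "insert x (W - {x}) = W" using xW by blast
  ultimately have dd: "rank ind (W - {x}) = rank ind W" unfolding cl_def by auto
  have insWx: "insert e (Y - {x}) = W - {x}" using eW x unfolding Y_def by blast
  have ee: "e \<notin> cl E ind (Y - {x})"
  proof
    assume "e \<in> cl E ind (Y - {x})"
    then have "rank ind (insert e (Y - {x})) = rank ind (Y - {x})" unfolding cl_def by blast
    then show False using insWx dd c b by simp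
  qed
  define P where "P = cycpart (W - {x})"
  have PWx: "P \<subseteq> W - {x}" using cycpart_sub unfolding P_def by blast
  have eP: "e \<notin> P"
  proof
    assume "e \<in> P"
    then obtain C where C: "circuit E ind C" "C \<subseteq> W - {x}" "e \<in> C" unfolding P_def cycpart_def by blast
    have "C - {e} \<subseteq> Y - {x}" using C unfolding Y_def by blast
    then have "e \<in> cl E ind (Y - {x})" using circuit_in_cl C by blast
    then show False using ee by blast
  qed
  have PY: "P \<subseteq> Y - {x}" using PWx eP unfolding Y_def by blast
  have PE: "P \<subseteq> E" using PWx WE by blast
  have clP: "cl E ind P = P"
  proof
    show "P \<subseteq> cl E ind P" using cl_sub[OF PE] .
    show "cl E ind P \<subseteq> P"
    proof
      fix z assume z: "z \<in> cl E ind P"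
      show "z \<in> P"
      proof (rule ccontr)
        assume zP: "z \<notin> P"
        obtain C where C: "circuit E ind C" "z \<in> C" "C \<subseteq> insert z P" using cl_circuit z zP by blast
        have zc: "z \<in> cl E ind (Y - {x})" using cl_mono[OF PY] z by blast
        have "cl E ind (Y - {x}) \<subseteq> cl E ind W" by (rule cl_mono) (use Y_def in blast)
        also have "\<dots> = W" using cl_idem[OF XE] unfolding W_def by simp
        finally have zW: "z \<in> W" using zc by blast
        have "z \<noteq> x" using zc a by blast
        then have CW: "C \<subseteq> W - {x}" using C zW PWx by blast
        have "C \<in> {C. circuit E ind C \<and> C \<subseteq> W - {x}}" using CW C(1) by blast
        then have "z \<in> P" unfolding P_def cycpart_def using C(2) by (rule UnionI)
        then show False using zP by blast
      qed
    qed
  qed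
  have Pfl: "flat E ind P" unfolding flat_def using PE clP by blast
  have Pcy: "P = \<Union>{C. circuit E ind C \<and> C \<subseteq> P}" unfolding P_def by (rule cycpart_cyclic)
  have Pcf: "cyclic_flat E ind P" unfolding cyclic_flat_def using Pfl Pcy by blast
  have WxE: "W - {x} \<subseteq> E" using WE by blast
  have j1: "int (card (W - {x})) - int (rank ind (W - {x})) = int (card P) - int (rank ind P)"
    unfolding P_def by (rule nullity_cycpart[OF WxE])
  have k1: "int (card P) - int (rank ind P) \<le> int (card (Aset A r P))" using N2[OF Pcf] .
  have AsP: "Aset A r P \<subseteq> Aset A r (W - {x})" using PWx unfolding Aset_def by blast
  have fin: "finite (Aset A r (W - {x}))" unfolding Aset_def by simp
  have k2: "card (Aset A r P) \<le> card (Aset A r (W - {x}))" using card_mono[OF fin AsP] .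
  have fW: "finite W" using WE finE finite_subset by blast
  have l1: "card W = card (W - {x}) + 1" using card_Suc_Diff1[OF fW xW] by simp
  have m1: "int (card (Aset A r W)) \<le> int (card W) - int (rank ind W)" using N1[OF WE] .
  have notin: "k \<notin> Aset A r (W - {x})" if kk: "k \<in> {1..r}" "e \<in> A k" for k
  proof
    assume "k \<in> Aset A r (W - {x})"
    then have Ak: "A k \<subseteq> W - {x}" unfolding Aset_def by blast
    obtain C where C: "circuit E ind C" "e \<in> C" "C \<subseteq> A k" using A_circ[OF kk] by blast
    have "C \<in> {C. circuit E ind C \<and> C \<subseteq> W - {x}}" using C Ak by blast
    then have "e \<in> P" unfolding P_def cycpart_def using C(2) by (rule UnionI)
    then show False using eP by blast
  qed
  have sub2: "insert i (insert j (Aset A r (W - {x}))) \<subseteq> Aset A r W"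
    using ir jr XW unfolding Aset_def unfolding X_def by blast
  have fW2: "finite (Aset A r W)" unfolding Aset_def by simp
  have "card (insert i (insert j (Aset A r (W - {x})))) = card (Aset A r (W - {x})) + 2"
    using notin[OF ir(1,2)] notin[OF jr(1,2)] ij fin by simp
  then have n1: "card (Aset A r (W - {x})) + 2 \<le> card (Aset A r W)"
    using card_mono[OF fW2 sub2] by simp
  show False using j1 k1 k2 l1 m1 n1 dd by linarith
qed

lemma K:
  assumes i: "i \<in> Ae A r e E" and j: "j \<in> Ae A r e E" and ij: "i \<noteq> j"
  shows "cyclic_flat E' d (cl E' d (A i \<union> A j - {e}))"
proof -
  have ir: "i \<in> {1..r}" "e \<in> A i" "A i \<subseteq> E" using Ae_mem[OF i] by auto
  have jr: "j \<in> {1..r}" "e \<in> A j" "A j \<subseteq> E" using Ae_mem[OF j] by auto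
  define X where "X = A i \<union> A j"
  define W where "W = cl E ind X"
  have XE: "X \<subseteq> E" using ir jr unfolding X_def by blast
  have XW: "X \<subseteq> W" using cl_sub[OF XE] unfolding W_def by blast
  have WE: "W \<subseteq> E" unfolding W_def by (rule cl_subE)
  have XeE: "X - {e} \<subseteq> E'" using XE by blast
  have AiX: "A i \<subseteq> insert e (X - {e})" unfolding X_def by blast
  have ecX: "e \<in> cl E ind (X - {e})" using e_cl[OF ir(1,2) AiX] .
  have clXe: "cl E ind (X - {e}) = W"
  proof
    show "cl E ind (X - {e}) \<subseteq> W" unfolding W_def by (rule cl_mono) blast
    have "X \<subseteq> cl E ind (X - {e})" using cl_sub[of "X - {e}"] XE ecX by blast
    then have "W \<subseteq> cl E ind (cl E ind (X - {e}))" unfolding W_def by (rule cl_mono)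
    also have "\<dots> = cl E ind (X - {e})" using cl_idem XE by blast
    finally show "W \<subseteq> cl E ind (X - {e})" .
  qed
  have eq: "cl E' d (A i \<union> A j - {e}) = W - {e}" using cl_del[OF XeE] clXe unfolding X_def by simp
  have clW: "cl E ind (W - {e}) - {e} = W - {e}"
  proof
    have "cl E ind (W - {e}) \<subseteq> cl E ind W" by (rule cl_mono) blast
    also have "\<dots> = W" using cl_idem[OF XE] unfolding W_def by simp
    finally show "cl E ind (W - {e}) - {e} \<subseteq> W - {e}" by blast
    show "W - {e} \<subseteq> cl E ind (W - {e}) - {e}" using cl_sub[of "W - {e}"] WE by blast
  qed
  have cyc: "W - {e} \<subseteq> \<Union>{C. circuit E ind C \<and> C \<subseteq> W - {e}}"
  proof
    fix y assume y: "y \<in> W - {e}"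
    show "y \<in> \<Union>{C. circuit E ind C \<and> C \<subseteq> W - {e}}"
    proof (cases "y \<in> X")
      case True
      then obtain C where "circuit E ind C" "y \<in> C" "C \<subseteq> W - {e}"
        using keyK[OF i j ij, of y] y unfolding X_def W_def by blast
      then show ?thesis by blast
    next
      case False
      then have "y \<in> cl E ind (X - {e})" "y \<notin> X - {e}" using y clXe by auto
      then obtain C where C: "circuit E ind C" "y \<in> C" "C \<subseteq> insert y (X - {e})" using cl_circuit by blast
      have "C \<subseteq> W - {e}" using C y XW by blast
      then show ?thesis using C by blast
    qed
  qed
  have "W - {e} \<subseteq> E'" using WE by blast
  moreover have "W - {e} = \<Union>{C. circuit E ind C \<and> C \<subseteq> W - {e}}" using cyc by blast
  ultimately show ?thesis unfolding eq cf_del using clW by blast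
qed

end

context lset
begin

definition phi :: "'a set \<Rightarrow> nat" where
  "phi F' = card {k \<in> Aset A r F'. A k = F'}
    + card {ed \<in> induced Ed (Ae A r e (F' \<union> {e})). \<exists>i j. ed = {i, j} \<and> cl E' d (A i \<union> A j - {e}) = F'}"

lemma Gp: "presenting E ind A r e Ed" using G unfolding minimal_presenting_def by (rule conjunct1)

lemma Gs: "simple_graph_on (Ae A r e E) Ed" using Gp unfolding presenting_def by (rule conjunct1)

lemma edge_form: "ed \<in> Ed \<Longrightarrow> \<exists>i j. i \<in> Ae A r e E \<and> j \<in> Ae A r e E \<and> i \<noteq> j \<and> ed = {i, j}"
  using Gs unfolding simple_graph_on_def by (rule bspec)

lemma Gcon: "i \<in> Ae A r e E \<Longrightarrow> j \<in> Ae A r e E \<Longrightarrow> i \<noteq> j \<Longrightarrow>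
   connected_graph (Ae A r e (cl E ind (A i \<union> A j))) (induced Ed (Ae A r e (cl E ind (A i \<union> A j))))"
proof -
  assume a: "i \<in> Ae A r e E" "j \<in> Ae A r e E" "i \<noteq> j"
  have "\<forall>i\<in>Ae A r e E. \<forall>j\<in>Ae A r e E. i \<noteq> j \<longrightarrow>
        (let U = Ae A r e (cl E ind (A i \<union> A j)) in connected_graph U (induced Ed U))"
    using Gp unfolding presenting_def by (rule conjunct2)
  then have "let U = Ae A r e (cl E ind (A i \<union> A j)) in connected_graph U (induced Ed U)"
    using a by blast
  then show ?thesis unfolding Let_def .
qed

lemma cf_sub: "cyclic_flat E' d F \<Longrightarrow> F \<subseteq> E'" by (drule cf_del[THEN iffD1]) (rule conjunct1)

lemma cf_cl: "cyclic_flat E' d F \<Longrightarrow> cl E ind F - {e} = F" by (drule cf_del[THEN iffD1]) (elim conjE)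

lemma Ae_mono: "X \<subseteq> Y \<Longrightarrow> Ae A r e X \<subseteq> Ae A r e Y"
  unfolding Ae_def Aset_def by blast

lemma Ae_fin: "finite (Ae A r e X)"
proof -
  have "Ae A r e X \<subseteq> {1..r}" unfolding Ae_def Aset_def by blast
  then show ?thesis using finite_subset by blast
qed

lemma U1: "cyclic_flat E' d F \<Longrightarrow> k \<in> Aset A r F \<Longrightarrow> cyclic_flat E' d (A k)"
proof -
  assume F: "cyclic_flat E' d F" and k: "k \<in> Aset A r F"
  have kr: "k \<in> {1..r}" "A k \<subseteq> F" using k unfolding Aset_def by auto
  have "A k \<subseteq> E'" using kr cf_sub[OF F] by blast
  moreover have "cl E ind (A k) - {e} = A k" using A_cl[OF kr(1)] calculation by blast
  moreover have "A k = \<Union>{C. circuit E ind C \<and> C \<subseteq> A k}" using A_cf[OF kr(1)] unfolding cyclic_flat_def by blast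
  ultimately show ?thesis unfolding cf_del by blast
qed

lemma ecl_Ae: "cyclic_flat E' d F \<Longrightarrow> i \<in> Ae A r e (F \<union> {e}) \<Longrightarrow> e \<in> cl E ind F"
proof -
  assume "i \<in> Ae A r e (F \<union> {e})"
  then have "i \<in> {1..r}" "e \<in> A i" "A i \<subseteq> insert e F" using Ae_mem by auto
  then show ?thesis using e_cl by blast
qed

lemma phi_le1:
  assumes F: "cyclic_flat E' d F" and c: "card (Ae A r e (F \<union> {e})) \<le> 1"
  shows "phi F = card {i \<in> Aset A r F. A i = F}"
proof -
  have "induced Ed (Ae A r e (F \<union> {e})) = {}"
  proof (rule ccontr)
    assume "induced Ed (Ae A r e (F \<union> {e})) \<noteq> {}"
    then obtain ed where ed: "ed \<in> Ed" "ed \<subseteq> Ae A r e (F \<union> {e})" unfolding induced_def by blast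
    then obtain i j where ij: "i \<noteq> j" "ed = {i, j}" using edge_form by blast
    have "{i, j} \<subseteq> Ae A r e (F \<union> {e})" using ed ij by blast
    then have "card {i, j} \<le> card (Ae A r e (F \<union> {e}))" by (rule card_mono[OF Ae_fin])
    then show False using c ij by simp
  qed
  then show ?thesis unfolding phi_def by simp
qed

lemma phi_gt1:
  assumes F: "cyclic_flat E' d F" and c: "card (Ae A r e (F \<union> {e})) > 1"
  shows "phi F = card {ed \<in> induced Ed (Ae A r e (F \<union> {e})). \<exists>i j. ed = {i, j} \<and> cl E' d (A i \<union> A j - {e}) = F}"
proof -
  have "Ae A r e (F \<union> {e}) \<noteq> {}" using c by (metis card.empty not_less_zero)
  then obtain i where "i \<in> Ae A r e (F \<union> {e})" by blast
  then have ec: "e \<in> cl E ind F" using ecl_Ae[OF F] by blast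
  have emp: "{k \<in> Aset A r F. A k = F} = {}"
  proof (rule ccontr)
    assume "{k \<in> Aset A r F. A k = F} \<noteq> {}"
    then obtain k where k: "k \<in> {1..r}" "A k = F" unfolding Aset_def by blast
    then have "cl E ind F = F" using A_cl by blast
    then show False using ec cf_sub[OF F] by blast
  qed
  show ?thesis unfolding phi_def emp by simp
qed

lemma cl_del_mono: "X \<subseteq> Y \<Longrightarrow> Y \<subseteq> E' \<Longrightarrow> cl E' d X \<subseteq> cl E' d Y"
proof -
  assume a: "X \<subseteq> Y" "Y \<subseteq> E'"
  then have "X \<subseteq> E'" by blast
  then show ?thesis using cl_del a cl_mono[OF a(1)] by auto
qed

end

context lset
begin

lemma Z_fin: "finite {F'. cyclic_flat E' d F' \<and> F' \<subseteq> F}"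
proof -
  have "{F'. cyclic_flat E' d F' \<and> F' \<subseteq> F} \<subseteq> Pow E" using cf_sub by blast
  then show ?thesis using finE finite_subset by blast
qed

lemma Aset_fin: "finite (Aset A r X)"
proof -
  have "Aset A r X \<subseteq> {1..r}" unfolding Aset_def by blast
  then show ?thesis using finite_subset by blast
qed

lemma S1:
  assumes F: "cyclic_flat E' d F"
  shows "(\<Sum>F'\<in>{F'. cyclic_flat E' d F' \<and> F' \<subseteq> F}. card {k \<in> Aset A r F'. A k = F'}) = card (Aset A r F)"
proof -
  let ?Z = "{F'. cyclic_flat E' d F' \<and> F' \<subseteq> F}"
  have gi: "A ` Aset A r F \<subseteq> ?Z"
  proof
    fix y assume "y \<in> A ` Aset A r F"
    then obtain k where k: "k \<in> Aset A r F" "y = A k" by blast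
    have "cyclic_flat E' d (A k)" using U1[OF F k(1)] .
    moreover have "A k \<subseteq> F" using k(1) unfolding Aset_def by blast
    ultimately show "y \<in> ?Z" using k(2) by blast
  qed
  have grp: "(\<Sum>y\<in>?Z. \<Sum>x\<in>{x. x \<in> Aset A r F \<and> A x = y}. (1::nat)) = (\<Sum>x\<in>Aset A r F. 1)"
    by (rule sum.group[OF Aset_fin Z_fin gi])
  have inner: "{x. x \<in> Aset A r F \<and> A x = y} = {k \<in> Aset A r y. A k = y}" if "y \<in> ?Z" for y
    using that unfolding Aset_def by auto
  have "(\<Sum>y\<in>?Z. card {k \<in> Aset A r y. A k = y}) = (\<Sum>y\<in>?Z. \<Sum>x\<in>{x. x \<in> Aset A r F \<and> A x = y}. (1::nat))"
    by (rule sum.cong) (simp_all add: inner)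
  also have "\<dots> = card (Aset A r F)" using grp by simp
  finally show ?thesis .
qed

lemma cl_del_F: "cyclic_flat E' d F \<Longrightarrow> cl E' d F = F"
  using cl_del[OF cf_sub] cf_cl by simp

lemma S2:
  assumes F: "cyclic_flat E' d F"
  shows "(\<Sum>F'\<in>{F'. cyclic_flat E' d F' \<and> F' \<subseteq> F}.
            card {ed \<in> induced Ed (Ae A r e (F' \<union> {e})). \<exists>i j. ed = {i, j} \<and> cl E' d (A i \<union> A j - {e}) = F'})
         = card (induced Ed (Ae A r e (F \<union> {e})))"
proof -
  let ?Z = "{F'. cyclic_flat E' d F' \<and> F' \<subseteq> F}"
  let ?V = "Ae A r e (F \<union> {e})"
  let ?S = "induced Ed ?V"
  define g where "g ed = cl E' d (\<Union>(A ` ed) - {e})" for ed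
  have gij: "g {i, j} = cl E' d (A i \<union> A j - {e})" for i j unfolding g_def by simp
  have FE: "F \<subseteq> E'" using cf_sub[OF F] .
  have finS: "finite ?S"
  proof -
    have "?S \<subseteq> Pow ?V" unfolding induced_def by blast
    then show ?thesis using Ae_fin finite_subset by blast
  qed
  have gi: "g ` ?S \<subseteq> ?Z"
  proof
    fix y assume "y \<in> g ` ?S"
    then obtain ed where ed: "ed \<in> ?S" "y = g ed" by blast
    have edE: "ed \<in> Ed" "ed \<subseteq> ?V" using ed(1) unfolding induced_def by auto
    obtain i j where ij: "i \<in> Ae A r e E" "j \<in> Ae A r e E" "i \<noteq> j" "ed = {i, j}"
      using edge_form[OF edE(1)] by blast
    have y: "y = cl E' d (A i \<union> A j - {e})" using ed(2) ij(4) gij by simp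
    have cf: "cyclic_flat E' d y" using K[OF ij(1-3)] y by simp
    have "i \<in> ?V" "j \<in> ?V" using edE(2) ij(4) by auto
    then have "A i \<subseteq> F \<union> {e}" "A j \<subseteq> F \<union> {e}" using Ae_mem by blast+
    then have "A i \<union> A j - {e} \<subseteq> F" by blast
    then have "y \<subseteq> cl E' d F" using y cl_del_mono FE by blast
    then have "y \<subseteq> F" using cl_del_F[OF F] by simp
    then show "y \<in> ?Z" using cf by blast
  qed
  have grp: "(\<Sum>y\<in>?Z. \<Sum>x\<in>{x. x \<in> ?S \<and> g x = y}. (1::nat)) = (\<Sum>x\<in>?S. 1)"
    by (rule sum.group[OF finS Z_fin gi])
  have inner: "{x. x \<in> ?S \<and> g x = y} =
     {ed \<in> induced Ed (Ae A r e (y \<union> {e})). \<exists>i j. ed = {i, j} \<and> cl E' d (A i \<union> A j - {e}) = y}"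
    if y: "y \<in> ?Z" for y
  proof
    show "{x. x \<in> ?S \<and> g x = y} \<subseteq>
      {ed \<in> induced Ed (Ae A r e (y \<union> {e})). \<exists>i j. ed = {i, j} \<and> cl E' d (A i \<union> A j - {e}) = y}"
    proof
      fix ed assume "ed \<in> {x. x \<in> ?S \<and> g x = y}"
      then have ed: "ed \<in> Ed" "g ed = y" unfolding induced_def by auto
      obtain i j where ij: "i \<in> Ae A r e E" "j \<in> Ae A r e E" "i \<noteq> j" "ed = {i, j}"
        using edge_form[OF ed(1)] by blast
      have c: "cl E' d (A i \<union> A j - {e}) = y" using ed(2) ij(4) gij by simp
      have ir: "i \<in> {1..r}" "e \<in> A i" "A i \<subseteq> E" using Ae_mem[OF ij(1)] by auto
      have jr: "j \<in> {1..r}" "e \<in> A j" "A j \<subseteq> E" using Ae_mem[OF ij(2)] by auto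
      have sub: "A i \<union> A j - {e} \<subseteq> E'" using ir jr by blast
      have "A i \<union> A j - {e} \<subseteq> y" using cl_del_sub[OF sub] c by simp
      then have "A i \<subseteq> y \<union> {e}" "A j \<subseteq> y \<union> {e}" by blast+
      then have "i \<in> Ae A r e (y \<union> {e})" "j \<in> Ae A r e (y \<union> {e})"
        using ir jr unfolding Ae_def Aset_def by auto
      then have "ed \<in> induced Ed (Ae A r e (y \<union> {e}))" using ed(1) ij(4) unfolding induced_def by auto
      then show "ed \<in> {ed \<in> induced Ed (Ae A r e (y \<union> {e})). \<exists>i j. ed = {i, j} \<and> cl E' d (A i \<union> A j - {e}) = y}"
        using ij(4) c by blast
    qed
  next
    show "{ed \<in> induced Ed (Ae A r e (y \<union> {e})). \<exists>i j. ed = {i, j} \<and> cl E' d (A i \<union> A j - {e}) = y}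
      \<subseteq> {x. x \<in> ?S \<and> g x = y}"
    proof
      fix ed assume "ed \<in> {ed \<in> induced Ed (Ae A r e (y \<union> {e})). \<exists>i j. ed = {i, j} \<and> cl E' d (A i \<union> A j - {e}) = y}"
      then obtain i j where ed: "ed \<in> Ed" "ed \<subseteq> Ae A r e (y \<union> {e})" "ed = {i, j}" "cl E' d (A i \<union> A j - {e}) = y"
        unfolding induced_def by blast
      have "y \<subseteq> F" using y by blast
      then have "Ae A r e (y \<union> {e}) \<subseteq> ?V" by (intro Ae_mono) blast
      then have "ed \<in> ?S" using ed unfolding induced_def by blast
      moreover have "g ed = y" using ed(3,4) gij by simp
      ultimately show "ed \<in> {x. x \<in> ?S \<and> g x = y}" by blast
    qed
  qed
  have "(\<Sum>y\<in>?Z. card {ed \<in> induced Ed (Ae A r e (y \<union> {e})). \<exists>i j. ed = {i, j} \<and> cl E' d (A i \<union> A j - {e}) = y})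
      = (\<Sum>y\<in>?Z. \<Sum>x\<in>{x. x \<in> ?S \<and> g x = y}. (1::nat))"
  proof (rule sum.cong)
    fix y assume y: "y \<in> ?Z"
    show "card {ed \<in> induced Ed (Ae A r e (y \<union> {e})). \<exists>i j. ed = {i, j} \<and> cl E' d (A i \<union> A j - {e}) = y}
      = (\<Sum>x\<in>{x. x \<in> ?S \<and> g x = y}. (1::nat))"
      unfolding inner[OF y] by simp
  qed simp
  also have "\<dots> = card ?S" using grp by simp
  finally show ?thesis .
qed

end

context lset
begin

lemma induced_empty: "induced Ed {} = {}"
proof (rule ccontr)
  assume "induced Ed {} \<noteq> {}"
  then obtain ed where ed: "ed \<in> Ed" "ed \<subseteq> {}" unfolding induced_def by blast
  obtain i j where "ed = {i, j}" using edge_form[OF ed(1)] by blast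
  then show False using ed(2) by blast
qed

lemma tot:
  assumes F: "cyclic_flat E' d F" and ac: "acyclic_graph (induced Ed (Ae A r e (F \<union> {e})))"
  shows "int (card (Aset A r F)) + int (card (induced Ed (Ae A r e (F \<union> {e})))) = int (card F) - int (rank ind F)"
proof -
  have FE': "F \<subseteq> E'" using cf_sub[OF F] .
  have FE: "F \<subseteq> E" using FE' by blast
  have clF: "cl E ind F - {e} = F" using cf_cl[OF F] .
  have cycF: "F = \<Union>{C. circuit E ind C \<and> C \<subseteq> F}" using F unfolding cf_del by (elim conjE)
  have fF: "finite F" using FE finE finite_subset by blast
  let ?V = "Ae A r e (F \<union> {e})"
  show ?thesis
  proof (cases "e \<in> cl E ind F")
    case False
    have V: "?V = {}"
    proof (rule ccontr)
      assume "?V \<noteq> {}"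
      then obtain i where "i \<in> ?V" by blast
      then show False using ecl_Ae[OF F] False by blast
    qed
    have "cl E ind F = F" using clF False by blast
    then have cfM: "cyclic_flat E ind F" unfolding cyclic_flat_def flat_def using FE cycF by blast
    have "int (card F) - int (rank ind F) = int (card (Aset A r F))" using N1[OF FE] N2[OF cfM] by linarith
    then show ?thesis using V induced_empty by simp
  next
    case True
    have eF: "e \<notin> F" using FE' by blast
    have FsubclF: "F \<subseteq> cl E ind F" using cl_sub[OF FE] .
    have clF2: "cl E ind F = insert e F" using clF True by blast
    have FeE: "insert e F \<subseteq> E" using FE eE by blast
    have clFe: "cl E ind (insert e F) = insert e F"
    proof
      have "cl E ind (insert e F) \<subseteq> cl E ind (cl E ind F)" by (rule cl_mono) (use clF2 in blast)
      also have "\<dots> = cl E ind F" using cl_idem[OF FE] .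
      finally show "cl E ind (insert e F) \<subseteq> insert e F" using clF2 by simp
      show "insert e F \<subseteq> cl E ind (insert e F)" using cl_sub[OF FeE] .
    qed
    have cycFe: "insert e F = \<Union>{C. circuit E ind C \<and> C \<subseteq> insert e F}"
    proof
      show "\<Union>{C. circuit E ind C \<and> C \<subseteq> insert e F} \<subseteq> insert e F" by blast
      show "insert e F \<subseteq> \<Union>{C. circuit E ind C \<and> C \<subseteq> insert e F}"
      proof
        fix z assume z: "z \<in> insert e F"
        show "z \<in> \<Union>{C. circuit E ind C \<and> C \<subseteq> insert e F}"
        proof (cases "z = e")
          case True
          obtain C where C: "circuit E ind C" "e \<in> C" "C \<subseteq> insert e F"
            using cl_circuit[OF \<open>e \<in> cl E ind F\<close> eF] by blast
          then show ?thesis using True by blast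
        next
          case False
          then have "z \<in> \<Union>{C. circuit E ind C \<and> C \<subseteq> F}" using z cycF by blast
          then show ?thesis by blast
        qed
      qed
    qed
    have cfM: "cyclic_flat E ind (insert e F)" unfolding cyclic_flat_def flat_def using FeE clFe cycFe by blast
    have rk: "rank ind (insert e F) = rank ind F" using True unfolding cl_def by blast
    have ck: "card (insert e F) = card F + 1" using eF fF by simp
    have VF: "?V = Ae A r e (insert e F)" by simp
    have AsU: "Aset A r (insert e F) = Aset A r F \<union> ?V"
      unfolding Ae_def Aset_def by auto
    have AsD: "Aset A r F \<inter> ?V = {}" using eF unfolding Ae_def Aset_def by blast
    have cU: "card (Aset A r (insert e F)) = card (Aset A r F) + card ?V"
      unfolding AsU using AsD Aset_fin Ae_fin by (simp add: card_Un_disjoint)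
    have nFe: "int (card (insert e F)) - int (rank ind (insert e F)) = int (card (Aset A r (insert e F)))"
      using N1[OF FeE] N2[OF cfM] by linarith
    have nF: "int (card F) - int (rank ind F) = int (card (Aset A r F)) + int (card ?V) - 1"
      using nFe rk ck cU by simp
    have "card ?V \<ge> 1" using N1[OF FE] nF by linarith
    then have Vne: "?V \<noteq> {}" by auto
    have VAe: "?V \<subseteq> Ae A r e E" using FeE by (intro Ae_mono) simp
    have DV: "\<forall>ed\<in>induced Ed ?V. \<exists>a b. a \<in> ?V \<and> b \<in> ?V \<and> a \<noteq> b \<and> ed = {a, b}"
    proof
      fix ed assume "ed \<in> induced Ed ?V"
      then have ed: "ed \<in> Ed" "ed \<subseteq> ?V" unfolding induced_def by auto
      obtain i j where "i \<noteq> j" "ed = {i, j}" using edge_form[OF ed(1)] by blast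
      then show "\<exists>a b. a \<in> ?V \<and> b \<in> ?V \<and> a \<noteq> b \<and> ed = {a, b}" using ed(2) by blast
    qed
    have con: "connected_graph ?V (induced Ed ?V)"
      unfolding connected_graph_def
    proof (intro ballI)
      fix u v assume u: "u \<in> ?V" and v: "v \<in> ?V"
      show "(u, v) \<in> {(x, y). {x, y} \<in> induced Ed ?V}\<^sup>*"
      proof (cases "u = v")
        case True then show ?thesis by simp
      next
        case False
        let ?U = "Ae A r e (cl E ind (A u \<union> A v))"
        have cU: "connected_graph ?U (induced Ed ?U)" using Gcon[OF _ _ False] u v VAe by blast
        have ur: "u \<in> {1..r}" "e \<in> A u" "A u \<subseteq> insert e F" using Ae_mem[OF u] by auto
        have vr: "v \<in> {1..r}" "e \<in> A v" "A v \<subseteq> insert e F" using Ae_mem[OF v] by auto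
        have uvE: "A u \<union> A v \<subseteq> E" using ur vr FeE by blast
        have "cl E ind (A u \<union> A v) \<subseteq> cl E ind (insert e F)" by (rule cl_mono) (use ur vr in blast)
        then have clsub: "cl E ind (A u \<union> A v) \<subseteq> insert e F" using clFe by simp
        have UV: "?U \<subseteq> ?V" using clsub by (intro Ae_mono) simp
        have uvcl: "A u \<union> A v \<subseteq> cl E ind (A u \<union> A v)" using cl_sub[OF uvE] .
        have uU: "u \<in> ?U" using ur uvcl unfolding Ae_def Aset_def by auto
        have vU: "v \<in> ?U" using vr uvcl unfolding Ae_def Aset_def by auto
        have p: "(u, v) \<in> {(x, y). {x, y} \<in> induced Ed ?U}\<^sup>*" using cU uU vU unfolding connected_graph_def by blast
        have "induced Ed ?U \<subseteq> induced Ed ?V" using UV unfolding induced_def by blast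
        then have "{(x, y). {x, y} \<in> induced Ed ?U} \<subseteq> {(x, y). {x, y} \<in> induced Ed ?V}" by blast
        then show ?thesis using p rtrancl_mono by blast
      qed
    qed
    have "card (induced Ed ?V) = card ?V - 1" by (rule tree_card[OF Ae_fin Vne DV ac con])
    then show ?thesis using nF \<open>card ?V \<ge> 1\<close> by simp
  qed
qed

lemma sum_phi:
  assumes F: "cyclic_flat E' d F" and ac: "acyclic_graph (induced Ed (Ae A r e (F \<union> {e})))"
  shows "(\<Sum>F'\<in>{F'. cyclic_flat E' d F' \<and> F' \<subseteq> F}. int (phi F')) = int (card F) - int (rank ind F)"
proof -
  let ?Z = "{F'. cyclic_flat E' d F' \<and> F' \<subseteq> F}"
  have "(\<Sum>F'\<in>?Z. phi F') = (\<Sum>F'\<in>?Z. card {k \<in> Aset A r F'. A k = F'})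
     + (\<Sum>F'\<in>?Z. card {ed \<in> induced Ed (Ae A r e (F' \<union> {e})). \<exists>i j. ed = {i, j} \<and> cl E' d (A i \<union> A j - {e}) = F'})"
    unfolding phi_def by (rule sum.distrib)
  also have "\<dots> = card (Aset A r F) + card (induced Ed (Ae A r e (F \<union> {e})))" using S1[OF F] S2[OF F] by simp
  finally have "(\<Sum>F'\<in>?Z. phi F') = card (Aset A r F) + card (induced Ed (Ae A r e (F \<union> {e})))" .
  then have "(\<Sum>F'\<in>?Z. int (phi F')) = int (card (Aset A r F)) + int (card (induced Ed (Ae A r e (F \<union> {e}))))"
    by (metis of_nat_add of_nat_sum)
  then show ?thesis using tot[OF F ac] by simp
qed

lemma main_ind:
  "finite F \<Longrightarrow> cyclic_flat E' d F \<Longrightarrow> acyclic_graph (induced Ed (Ae A r e (F \<union> {e}))) \<Longrightarrow> alpha E' d F = int (phi F)"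
proof (induct F rule: finite_psubset_induct)
  case (psubset F)
  let ?L = "{F'. cyclic_flat E' d F' \<and> F' \<subset> F}"
  let ?Z = "{F'. cyclic_flat E' d F' \<and> F' \<subseteq> F}"
  have a: "alpha E' d F = int (card F) - int (rank d F) - (\<Sum>F'\<in>?L. alpha E' d F')"
    by (subst alpha.simps) (simp add: psubset.hyps del: alpha.simps)
  have IH: "alpha E' d F' = int (phi F')" if F': "F' \<in> ?L" for F'
  proof -
    have s: "F' \<subset> F" "cyclic_flat E' d F'" using F' by auto
    have "Ae A r e (F' \<union> {e}) \<subseteq> Ae A r e (F \<union> {e})" using s(1) by (intro Ae_mono) blast
    then have "induced Ed (Ae A r e (F' \<union> {e})) \<subseteq> induced Ed (Ae A r e (F \<union> {e}))"
      unfolding induced_def by blast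
    then have "acyclic_graph (induced Ed (Ae A r e (F' \<union> {e})))" using acyclic_mono psubset.prems(2) by blast
    then show ?thesis using psubset.hyps(2)[OF s(1) s(2)] by blast
  qed
  have sL: "(\<Sum>F'\<in>?L. alpha E' d F') = (\<Sum>F'\<in>?L. int (phi F'))" by (rule sum.cong) (simp_all add: IH del: alpha.simps)
  have ZL: "?Z = insert F ?L" using psubset.prems(1) by auto
  have finL: "finite ?L" using Z_fin[of F] ZL by simp
  have "(\<Sum>F'\<in>?Z. int (phi F')) = int (phi F) + (\<Sum>F'\<in>?L. int (phi F'))"
    unfolding ZL using finL by simp
  then have sZ: "int (phi F) + (\<Sum>F'\<in>?L. int (phi F')) = int (card F) - int (rank ind F)"
    using sum_phi[OF psubset.prems] by simp
  have "F - {e} = F" using cf_sub[OF psubset.prems(1)] by blast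
  then have rd: "rank d F = rank ind F" using rank_del by simp
  show ?case using a sL sZ rd by linarith
qed

end


theorem lemma3p3:
  fixes E :: "'a set" and ind :: "'a set \<Rightarrow> bool" and A :: "nat \<Rightarrow> 'a set"
    and r :: nat and e :: 'a and Ed :: "nat set set" and F :: "'a set"
  assumes M: "matroid E ind"
    and dual_transversal: "\<forall>X. dual_indep E ind X \<longleftrightarrow> partial_transversal E A r X"
    and r_def: "r = rank (dual_indep E ind) E"
    and maxpres: "maximal_presentation E ind A r"
    and e: "e \<in> E"
    and G: "minimal_presenting E ind A r e Ed"
    and F: "cyclic_flat (E - {e}) (del_indep ind e) F"
    and forest: "acyclic_graph (induced Ed (Ae A r e (F \<union> {e})))"
  shows "(card (Ae A r e (F \<union> {e})) \<le> 1 \<longrightarrow>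
            alpha (E - {e}) (del_indep ind e) F = int (card {i \<in> Aset A r F. A i = F}))
       \<and> (card (Ae A r e (F \<union> {e})) > 1 \<longrightarrow>
            alpha (E - {e}) (del_indep ind e) F =
              int (card {ed \<in> induced Ed (Ae A r e (F \<union> {e})).
                 \<exists>i j. ed = {i, j} \<and> cl (E - {e}) (del_indep ind e) (A i \<union> A j - {e}) = F}))"
proof -
  have L: "lset E ind A r e Ed"
    by (rule lset.intro[OF matr.intro[OF M] lset_axioms.intro[OF dual_transversal r_def maxpres e G]])
  interpret lset E ind A r e Ed by (rule L)
  have FE: "F \<subseteq> E - {e}" using cf_sub[OF F] .
  have fF: "finite F" using FE finE finite_subset by blast
  have al: "alpha (E - {e}) (del_indep ind e) F = int (phi F)" using main_ind[OF fF F forest] .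
  show ?thesis
  proof (intro conjI impI)
    assume "card (Ae A r e (F \<union> {e})) \<le> 1"
    then show "alpha (E - {e}) (del_indep ind e) F = int (card {i \<in> Aset A r F. A i = F})"
      using al phi_le1[OF F] by (simp del: alpha.simps)
  next
    assume "card (Ae A r e (F \<union> {e})) > 1"
    then show "alpha (E - {e}) (del_indep ind e) F =
              int (card {ed \<in> induced Ed (Ae A r e (F \<union> {e})).
                 \<exists>i j. ed = {i, j} \<and> cl (E - {e}) (del_indep ind e) (A i \<union> A j - {e}) = F})"
      using al phi_gt1[OF F] by (simp del: alpha.simps)
  qed
qed

end
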